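(* Let $n\ge1$ and let $\mathcal{I}$ be an interval hypergraph on $[n]$ containing all singletons. The map $\pi\mapsto \mathrm{Or}_\pi$ from the weak order on permutations of $[n]$ to $P_{\mathcal{I}}$ is a meet (resp. join) semilattice morphism if and only if $\mathcal{I}$ is closed under initial (resp. final) subintervals, i.e. $[i,k]\in\mathcal{I}$ implies $[i,j]\in\mathcal{I}$ (resp. $[j,k]\in\mathcal{I}$) for all $1\le i<j<k\le n$.
   Context: An interval hypergraph $\mathcal{I}$ on $[n]$ is a collection of intervals $[i,j]=\{i,\dots,j\}$ of $[n]$, by convention containing all singletons. An orientation is a map $O:\mathcal{I}\to[n]$ with $O(I)\in I$; it is acyclic if there are no $H_1,\dots,H_k\in\mathcal{I}$, $k\ge2$, with $O(H_{i+1})\in H_i\setminus\{O(H_i)\}$ for $i\in[k-1]$ and $O(H_1)\in H_k\setminus\{O(H_k)\}$. Orientations $O\ne O'$ are related by an increasing flip (from $O$ to $O'$) if there exist $1\le i<j\le n$ such that for all $H$: if $O(H)\ne O'(H)$ then $O(H)=i$, $O'(H)=j$; and if $\{i,j\}\subseteq H$ then $O(H)=i\iff O'(H)=j$. $P_{\mathcal{I}}$ is the transitive closure of the increasing flip relation on acyclic orientations. For a permutation $\pi$ of $[n]$ (in one-line notation), $\mathrm{Or}_\pi$ is the acyclic orientation with $\mathrm{Or}_\pi(I)=\pi(\min\{j:\pi(j)\in I\})$; this map is a surjective poset morphism from the weak order to $P_{\mathcal{I}}$. A map $\phi$ between meet semilattices is a meet semilattice morphism if $\phi(a\wedge b)=\phi(a)\wedge\phi(b)$;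 equivalently, each fiber of $\phi$ is order convex and has a unique minimal element, and the map sending $a$ to the minimal element of its fiber is order preserving. Join semilattice morphisms are defined dually. *)

theory Defs
  imports "HOL-Combinatorics.Permutations"
begin

definition interval_hypergraph :: "nat \<Rightarrow> nat set set \<Rightarrow> bool" where
  "interval_hypergraph n I \<longleftrightarrow>
     I \<subseteq> {{i..j} | i j. 1 \<le> i \<and> i \<le> j \<and> j \<le> n} \<and>
     (\<forall>i\<in>{1..n}. {i} \<in> I)"

text \<open>Orientations: maps R with R H \<in> H for H \<in> I; made extensional by R H = 0 outside I.\<close>

definition orientation :: "nat set set \<Rightarrow> (nat set \<Rightarrow> nat) \<Rightarrow> bool" where
  "orientation I R \<longleftrightarrow> (\<forall>H\<in>I. R H \<in> H) \<and> (\<forall>H. H \<notin> I \<longrightarrow> R H = 0)"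

definition acyclic_orientation :: "nat set set \<Rightarrow> (nat set \<Rightarrow> nat) \<Rightarrow> bool" where
  "acyclic_orientation I R \<longleftrightarrow> orientation I R \<and>
     \<not> (\<exists>(k::nat) (hs :: nat \<Rightarrow> nat set). k \<ge> 2 \<and> (\<forall>i<k. hs i \<in> I) \<and>
          (\<forall>i<k. R (hs ((i + 1) mod k)) \<in> hs i - {R (hs i)}))"

definition increasing_flip :: "nat \<Rightarrow> nat set set \<Rightarrow> (nat set \<Rightarrow> nat) \<Rightarrow> (nat set \<Rightarrow> nat) \<Rightarrow> bool" where
  "increasing_flip n I R Q \<longleftrightarrow> R \<noteq> Q \<and>
     (\<exists>i j. 1 \<le> i \<and> i < j \<and> j \<le> n \<and>
        (\<forall>H\<in>I. (R H \<noteq> Q H \<longrightarrow> R H = i \<and> Q H = j) \<and>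
                ({i, j} \<subseteq> H \<longrightarrow> (R H = i \<longleftrightarrow> Q H = j))))"

definition flip_rel :: "nat \<Rightarrow> nat set set \<Rightarrow> ((nat set \<Rightarrow> nat) \<times> (nat set \<Rightarrow> nat)) set" where
  "flip_rel n I = {(R, Q). acyclic_orientation I R \<and> acyclic_orientation I Q \<and> increasing_flip n I R Q}"

definition P_le :: "nat \<Rightarrow> nat set set \<Rightarrow> (nat set \<Rightarrow> nat) \<Rightarrow> (nat set \<Rightarrow> nat) \<Rightarrow> bool" where
  "P_le n I R Q \<longleftrightarrow> acyclic_orientation I R \<and> acyclic_orientation I Q \<and> (R, Q) \<in> (flip_rel n I)\<^sup>*"

definition inversions :: "(nat \<Rightarrow> nat) \<Rightarrow> (nat \<times> nat) set" where
  "inversions \<pi> = {(a, b). a < b \<and> inv \<pi> a > inv \<pi> b}"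

definition weak_le :: "nat \<Rightarrow> (nat \<Rightarrow> nat) \<Rightarrow> (nat \<Rightarrow> nat) \<Rightarrow> bool" where
  "weak_le n \<pi> \<sigma> \<longleftrightarrow> \<pi> permutes {1..n} \<and> \<sigma> permutes {1..n} \<and> inversions \<pi> \<subseteq> inversions \<sigma>"

definition Or_perm :: "nat set set \<Rightarrow> (nat \<Rightarrow> nat) \<Rightarrow> (nat set \<Rightarrow> nat)" where
  "Or_perm I \<pi> = (\<lambda>H. if H \<in> I then \<pi> (LEAST j. \<pi> j \<in> H) else 0)"

definition is_meet :: "'a set \<Rightarrow> ('a \<Rightarrow> 'a \<Rightarrow> bool) \<Rightarrow> 'a \<Rightarrow> 'a \<Rightarrow> 'a \<Rightarrow> bool" where
  "is_meet C le a b m \<longleftrightarrow> m \<in> C \<and> le m a \<and> le m b \<and> (\<forall>x\<in>C. le x a \<and> le x b \<longrightarrow> le x m)"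

definition is_join :: "'a set \<Rightarrow> ('a \<Rightarrow> 'a \<Rightarrow> bool) \<Rightarrow> 'a \<Rightarrow> 'a \<Rightarrow> 'a \<Rightarrow> bool" where
  "is_join C le a b m \<longleftrightarrow> m \<in> C \<and> le a m \<and> le b m \<and> (\<forall>x\<in>C. le a x \<and> le b x \<longrightarrow> le m x)"

text \<open>phi(a meet b) is the meet of phi a and phi b (in particular that meet exists).\<close>

definition meet_morphism :: "'a set \<Rightarrow> ('a \<Rightarrow> 'a \<Rightarrow> bool) \<Rightarrow> 'b set \<Rightarrow> ('b \<Rightarrow> 'b \<Rightarrow> bool) \<Rightarrow> ('a \<Rightarrow> 'b) \<Rightarrow> bool" where
  "meet_morphism A leA B leB \<phi> \<longleftrightarrow>
     (\<forall>a\<in>A. \<forall>b\<in>A. \<forall>m. is_meet A leA a b m \<longrightarrow> is_meet B leB (\<phi> a) (\<phi> b) (\<phi> m))"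

definition join_morphism :: "'a set \<Rightarrow> ('a \<Rightarrow> 'a \<Rightarrow> bool) \<Rightarrow> 'b set \<Rightarrow> ('b \<Rightarrow> 'b \<Rightarrow> bool) \<Rightarrow> ('a \<Rightarrow> 'b) \<Rightarrow> bool" where
  "join_morphism A leA B leB \<phi> \<longleftrightarrow>
     (\<forall>a\<in>A. \<forall>b\<in>A. \<forall>m. is_join A leA a b m \<longrightarrow> is_join B leB (\<phi> a) (\<phi> b) (\<phi> m))"

definition closed_initial :: "nat \<Rightarrow> nat set set \<Rightarrow> bool" where
  "closed_initial n I \<longleftrightarrow> (\<forall>i j k. 1 \<le> i \<and> i < j \<and> j < k \<and> k \<le> n \<and> {i..k} \<in> I \<longrightarrow> {i..j} \<in> I)"

definition closed_final :: "nat \<Rightarrow> nat set set \<Rightarrow> bool" where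
  "closed_final n I \<longleftrightarrow> (\<forall>i j k. 1 \<le> i \<and> i < j \<and> j < k \<and> k \<le> n \<and> {i..k} \<in> I \<longrightarrow> {j..k} \<in> I)"

end

theory Submission
  imports Defs
begin

definition arcs :: "nat set set \<Rightarrow> (nat set \<Rightarrow> nat) \<Rightarrow> (nat \<times> nat) set" where
  "arcs I X = {(c, x). \<exists>H\<in>I. X H = c \<and> x \<in> H \<and> x \<noteq> c}"

definition darcs :: "nat set set \<Rightarrow> (nat set \<Rightarrow> nat) \<Rightarrow> (nat \<times> nat) set" where
  "darcs I X = {(c, x). x < c \<and> (\<exists>H\<in>I. X H = c \<and> x \<in> H)}"

definition uarcs :: "nat set set \<Rightarrow> (nat set \<Rightarrow> nat) \<Rightarrow> (nat \<times> nat) set" where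
  "uarcs I X = {(c, x). c < x \<and> (\<exists>H\<in>I. X H = c \<and> x \<in> H)}"

lemma ih_interval:
  assumes "interval_hypergraph n I" "H \<in> I"
  obtains l r where "H = {l..r}" "1 \<le> l" "l \<le> r" "r \<le> n"
  using assms unfolding interval_hypergraph_def by blast

lemma ih_sub: "interval_hypergraph n I \<Longrightarrow> H \<in> I \<Longrightarrow> H \<subseteq> {1..n}"
  by (erule (1) ih_interval) auto

lemma ih_ne: "interval_hypergraph n I \<Longrightarrow> H \<in> I \<Longrightarrow> H \<noteq> {}"
  by (erule (1) ih_interval) auto

lemma ih_between:
  "interval_hypergraph n I \<Longrightarrow> H \<in> I \<Longrightarrow> u \<in> H \<Longrightarrow> w \<in> H \<Longrightarrow> u \<le> a \<Longrightarrow> a \<le> w \<Longrightarrow> a \<in> H"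
  by (erule (1) ih_interval) auto

lemma Or_min:
  assumes ih: "interval_hypergraph n I" and p: "\<pi> permutes {1..n}" and H: "H \<in> I"
  shows "Or_perm I \<pi> H \<in> H \<and> (\<forall>w\<in>H. inv \<pi> (Or_perm I \<pi> H) \<le> inv \<pi> w)"
proof -
  obtain w0 where w0: "w0 \<in> H" using ih_ne[OF ih H] by blast
  have ex: "\<exists>j. \<pi> j \<in> H" using w0 permutes_inverses(1)[OF p, of w0] by (intro exI[of _ "inv \<pi> w0"]) simp
  let ?L = "LEAST j. \<pi> j \<in> H"
  have L: "\<pi> ?L \<in> H" using LeastI_ex[OF ex] .
  have "\<forall>w\<in>H. ?L \<le> inv \<pi> w"
  proof
    fix w assume "w \<in> H"
    then have "\<pi> (inv \<pi> w) \<in> H" using permutes_inverses(1)[OF p, of w] by simp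
    then show "?L \<le> inv \<pi> w" by (rule Least_le)
  qed
  moreover have "inv \<pi> (\<pi> ?L) = ?L" using permutes_inverses(2)[OF p] .
  ultimately show ?thesis using L H unfolding Or_perm_def by simp
qed

lemma inv_perm_inj: "\<pi> permutes S \<Longrightarrow> inv \<pi> a = inv \<pi> b \<Longrightarrow> a = b"
  by (metis permutes_inverses(1))

lemma Or_strict:
  assumes ih: "interval_hypergraph n I" and p: "\<pi> permutes {1..n}" and H: "H \<in> I"
    and w: "w \<in> H" "w \<noteq> Or_perm I \<pi> H"
  shows "inv \<pi> (Or_perm I \<pi> H) < inv \<pi> w"
  using Or_min[OF ih p H] w inv_perm_inj[OF p] by (metis le_neq_implies_less)

lemma Or_eqI:
  assumes ih: "interval_hypergraph n I" and p: "\<pi> permutes {1..n}" and H: "H \<in> I"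
    and v: "v \<in> H" and min: "\<forall>w\<in>H. w \<noteq> v \<longrightarrow> inv \<pi> v < inv \<pi> w"
  shows "Or_perm I \<pi> H = v"
  using Or_min[OF ih p H] v min by (meson leD)

lemma Or_out: "H \<notin> I \<Longrightarrow> Or_perm I \<pi> H = 0"
  by (simp add: Or_perm_def)

lemma two_cycle:
  assumes ac: "acyclic_orientation I X" and h: "H1 \<in> I" "H2 \<in> I"
    "X H2 \<in> H1 - {X H1}" "X H1 \<in> H2 - {X H2}"
  shows False
proof -
  define hs where "hs = (\<lambda>t::nat. if t = 0 then H1 else H2)"
  have 1: "\<forall>i<2. hs i \<in> I" using h unfolding hs_def by simp
  have 2: "\<forall>i<2. X (hs ((i + 1) mod 2)) \<in> hs i - {X (hs i)}"
  proof (intro allI impI)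
    fix i :: nat assume "i < 2"
    then have "i = 0 \<or> i = 1" by auto
    then show "X (hs ((i + 1) mod 2)) \<in> hs i - {X (hs i)}"
    proof
      assume "i = 0" then show ?thesis using h(3) unfolding hs_def by simp
    next
      assume "i = 1" then show ?thesis using h(4) unfolding hs_def by simp
    qed
  qed
  have "\<exists>(k::nat) hs. k \<ge> 2 \<and> (\<forall>i<k. hs i \<in> I) \<and>
          (\<forall>i<k. X (hs ((i + 1) mod k)) \<in> hs i - {X (hs i)})"
    using 1 2 by (intro exI[of _ "2::nat"] exI[of _ hs]) simp
  then show False using ac unfolding acyclic_orientation_def by blast
qed

lemma Or_acyclic:
  assumes ih: "interval_hypergraph n I" and p: "\<pi> permutes {1..n}"
  shows "acyclic_orientation I (Or_perm I \<pi>)"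
proof -
  let ?R = "Or_perm I \<pi>"
  have orient: "orientation I ?R"
    unfolding orientation_def using Or_min[OF ih p] Or_out by blast
  have noc: "False" if k: "k \<ge> 2" and hs: "\<forall>i<k. hs i \<in> I"
      and cyc: "\<forall>i<k. ?R (hs ((i + 1) mod k)) \<in> hs i - {?R (hs i)}" for k :: nat and hs
  proof -
    define f where "f t = inv \<pi> (?R (hs t))" for t
    have step: "f t < f ((t + 1) mod k)" if "t < k" for t
    proof -
      have "hs t \<in> I" using hs that by blast
      moreover have "?R (hs ((t + 1) mod k)) \<in> hs t" "?R (hs ((t + 1) mod k)) \<noteq> ?R (hs t)"
        using cyc that by blast+
      ultimately show ?thesis unfolding f_def using Or_strict[OF ih p] by blast
    qed
    have mono: "t < k \<Longrightarrow> f 0 + t \<le> f t" for t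
    proof (induction t)
      case 0 then show ?case by simp
    next
      case (Suc t)
      have "f t < f ((t + 1) mod k)" using step[of t] Suc.prems by simp
      moreover have "(t + 1) mod k = Suc t" using Suc.prems by simp
      ultimately show ?case using Suc by simp
    qed
    have "f 0 + (k - 1) \<le> f (k - 1)" using mono[of "k - 1"] k by linarith
    moreover have "f (k - 1) < f 0" using step[of "k - 1"] k by simp
    ultimately show False by simp
  qed
  show ?thesis unfolding acyclic_orientation_def using orient noc by blast
qed


lemma ext_of_Or:
  assumes ih: "interval_hypergraph n I" and p: "\<pi> permutes {1..n}"
    and c: "(c, x) \<in> arcs I (Or_perm I \<pi>)"
  shows "inv \<pi> c < inv \<pi> x"
proof -
  obtain H where H: "H \<in> I" "Or_perm I \<pi> H = c" "x \<in> H" "x \<noteq> c"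
    using c unfolding arcs_def by blast
  show ?thesis using Or_strict[OF ih p H(1) H(3)] H by simp
qed

lemma Or_of_ext:
  assumes ih: "interval_hypergraph n I" and p: "\<pi> permutes {1..n}"
    and X: "orientation I X"
    and ext: "\<forall>(c, x)\<in>arcs I X. inv \<pi> c < inv \<pi> x"
  shows "Or_perm I \<pi> = X"
proof
  fix H
  show "Or_perm I \<pi> H = X H"
  proof (cases "H \<in> I")
    case True
    have "X H \<in> H" using X True unfolding orientation_def by blast
    moreover have "\<forall>w\<in>H. w \<noteq> X H \<longrightarrow> inv \<pi> (X H) < inv \<pi> w"
    proof (intro ballI impI)
      fix w assume "w \<in> H" "w \<noteq> X H"
      then have "(X H, w) \<in> arcs I X" using True unfolding arcs_def by blast
      then show "inv \<pi> (X H) < inv \<pi> w" using ext by blast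
    qed
    ultimately show ?thesis using Or_eqI[OF ih p True] by blast
  next
    case False
    then show ?thesis using X Or_out unfolding orientation_def by metis
  qed
qed

lemma arcs_sub:
  assumes ih: "interval_hypergraph n I" and X: "orientation I X"
  shows "arcs I X \<subseteq> {1..n} \<times> {1..n}"
proof
  fix e assume "e \<in> arcs I X"
  then obtain c x H where e: "e = (c, x)" "H \<in> I" "X H = c" "x \<in> H"
    unfolding arcs_def by blast
  have "c \<in> H" using X e unfolding orientation_def by blast
  then show "e \<in> {1..n} \<times> {1..n}" using ih_sub[OF ih e(2)] e by blast
qed

lemma arcs_acyclic:
  assumes ac: "acyclic_orientation I X"
  shows "acyclic (arcs I X)"
  unfolding acyclic_def
proof (intro allI notI)
  fix v assume "(v, v) \<in> (arcs I X)\<^sup>+"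
  then obtain m where m: "m > 0" "(v, v) \<in> (arcs I X) ^^ m" using trancl_power by blast
  then obtain f where f: "f 0 = v" "f m = v" "\<forall>i<m. (f i, f (Suc i)) \<in> arcs I X"
    using relpow_fun_conv by metis
  define P where "P t H \<longleftrightarrow> H \<in> I \<and> X H = f t \<and> f (Suc t) \<in> H \<and> f (Suc t) \<noteq> f t" for t H
  define hs where "hs t = (SOME H. P t H)" for t
  have hs: "P t (hs t)" if "t < m" for t
  proof -
    have "\<exists>H. P t H" using f(3) that unfolding arcs_def P_def by blast
    then show ?thesis unfolding hs_def by (rule someI_ex)
  qed
  have m2: "m \<ge> 2"
  proof (rule ccontr)
    assume "\<not> m \<ge> 2"
    then have "m = 1" using m by simp
    then show False using hs[of 0] f unfolding P_def by simp
  qed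
  have 1: "\<forall>i<m. hs i \<in> I" using hs unfolding P_def by blast
  have 2: "\<forall>i<m. X (hs ((i + 1) mod m)) \<in> hs i - {X (hs i)}"
  proof (intro allI impI)
    fix t assume t: "t < m"
    show "X (hs ((t + 1) mod m)) \<in> hs t - {X (hs t)}"
    proof (cases "t + 1 < m")
      case True
      then have "(t + 1) mod m = Suc t" by simp
      then show ?thesis using hs[OF t] hs[OF True] unfolding P_def by simp
    next
      case False
      then have "t + 1 = m" using t by simp
      then have "(t + 1) mod m = 0" by simp
      moreover have "X (hs 0) = f (Suc t)" using hs[of 0] m f \<open>t + 1 = m\<close> unfolding P_def by simp
      ultimately show ?thesis using hs[OF t] unfolding P_def by simp
    qed
  qed
  show False using ac m2 1 2 unfolding acyclic_orientation_def by blast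
qed

lemma arcs_wf:
  assumes ih: "interval_hypergraph n I" and ac: "acyclic_orientation I X"
  shows "wf (arcs I X)"
proof (rule finite_acyclic_wf)
  show "finite (arcs I X)"
    using arcs_sub[OF ih] ac unfolding acyclic_orientation_def
    by (meson finite_SigmaI finite_atLeastAtMost finite_subset)
  show "acyclic (arcs I X)" using arcs_acyclic[OF ac] .
qed


section \<open>Inversions and ranks\<close>

lemma inversions_in:
  assumes p: "\<pi> permutes {1..n}" and ab: "(a, b) \<in> inversions \<pi>"
  shows "a \<in> {1..n} \<and> b \<in> {1..n}"
proof -
  have q: "inv \<pi> permutes {1..n}" using permutes_inv[OF p] .
  have lt: "a < b" "inv \<pi> b < inv \<pi> a" using ab unfolding inversions_def by auto
  have b: "b \<in> {1..n}"
  proof (rule ccontr)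
    assume nb: "b \<notin> {1..n}"
    then have ib: "inv \<pi> b = b" using permutes_not_in[OF q] by blast
    show False
    proof (cases "a \<in> {1..n}")
      case True
      then have "inv \<pi> a \<in> {1..n}" using permutes_in_image[OF q] by blast
      moreover have "b > n" using nb lt(1) True by auto
      ultimately show False using lt ib by auto
    next
      case False
      then show False using permutes_not_in[OF q False] ib lt by simp
    qed
  qed
  have a: "a \<in> {1..n}"
  proof (rule ccontr)
    assume na: "a \<notin> {1..n}"
    then have "a = 0" using b lt(1) by auto
    moreover have "inv \<pi> a = a" using permutes_not_in[OF q na] .
    ultimately show False using lt by simp
  qed
  show ?thesis using a b by blast
qed

lemma inversions_rank:
  fixes r :: "nat \<Rightarrow> nat"
  assumes p: "\<pi> permutes {1..n}"
    and rk: "\<forall>u\<in>{1..n}. \<forall>v\<in>{1..n}. inv \<pi> u < inv \<pi> v \<longleftrightarrow> r u < r v"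
  shows "inversions \<pi> = {(a, b). a \<in> {1..n} \<and> b \<in> {1..n} \<and> a < b \<and> r b < r a}"
proof (intro set_eqI iffI)
  fix e assume e: "e \<in> inversions \<pi>"
  obtain a b where ab: "e = (a, b)" by fastforce
  then have "a \<in> {1..n} \<and> b \<in> {1..n}" using inversions_in[OF p] e by blast
  then show "e \<in> {(a, b). a \<in> {1..n} \<and> b \<in> {1..n} \<and> a < b \<and> r b < r a}"
    using e ab rk unfolding inversions_def by auto
next
  fix e assume "e \<in> {(a, b). a \<in> {1..n} \<and> b \<in> {1..n} \<and> a < b \<and> r b < r a}"
  then show "e \<in> inversions \<pi>" using rk unfolding inversions_def by auto
qed

lemma perm_of_rank:
  fixes r :: "nat \<Rightarrow> nat" and n :: nat
  assumes inj: "inj_on r {1..n}"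
  shows "\<exists>\<pi>. \<pi> permutes {1..n} \<and>
           (\<forall>u\<in>{1..n}. \<forall>v\<in>{1..n}. inv \<pi> u < inv \<pi> v \<longleftrightarrow> r u < r v)"
proof -
  let ?S = "{1..n::nat}"
  define q where "q v = (if v \<in> ?S then Suc (card {u\<in>?S. r u < r v}) else v)" for v
  have mono: "q u < q v" if "u \<in> ?S" "v \<in> ?S" "r u < r v" for u v
  proof -
    have "{w\<in>?S. r w < r u} \<subset> {w\<in>?S. r w < r v}" using that by auto
    then have "card {w\<in>?S. r w < r u} < card {w\<in>?S. r w < r v}"
      by (rule psubset_card_mono[rotated]) simp
    then show ?thesis using that unfolding q_def by simp
  qed
  have iff: "q u < q v \<longleftrightarrow> r u < r v" if "u \<in> ?S" "v \<in> ?S" for u v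
  proof
    assume "q u < q v"
    show "r u < r v"
    proof (rule ccontr)
      assume "\<not> r u < r v"
      then have "r v < r u \<or> r u = r v" by auto
      then show False
      proof
        assume "r v < r u" then show False using mono[OF that(2,1)] \<open>q u < q v\<close> by simp
      next
        assume "r u = r v" then have "u = v" using inj that unfolding inj_on_def by blast
        then show False using \<open>q u < q v\<close> by simp
      qed
    qed
  qed (rule mono[OF that])
  have injq: "inj_on q ?S"
  proof (rule inj_onI)
    fix u v assume uv: "u \<in> ?S" "v \<in> ?S" "q u = q v"
    then have "\<not> r u < r v" "\<not> r v < r u" using iff[OF uv(1,2)] iff[OF uv(2,1)] by auto
    then have "r u = r v" by simp
    then show "u = v" using inj uv unfolding inj_on_def by blast
  qed
  have img: "q ` ?S \<subseteq> ?S"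
  proof
    fix y assume "y \<in> q ` ?S"
    then obtain v where v: "v \<in> ?S" "y = q v" by blast
    have "{u\<in>?S. r u < r v} \<subseteq> ?S - {v}" by auto
    then have "card {u\<in>?S. r u < r v} \<le> card (?S - {v})" by (intro card_mono) auto
    also have "\<dots> = n - 1" using v by simp
    finally show "y \<in> ?S" using v unfolding q_def by auto
  qed
  have "q ` ?S = ?S" using endo_inj_surj[OF _ img injq] by simp
  then have "bij_betw q ?S ?S" using injq unfolding bij_betw_def by simp
  then have qp: "q permutes ?S" by (rule bij_imp_permutes) (auto simp add: q_def)
  have pp: "inv q permutes ?S" using permutes_inv[OF qp] .
  have "inv (inv q) = q" using permutes_inv_inv[OF qp] .
  then show ?thesis using pp iff by (intro exI[of _ "inv q"]) simp
qed


section \<open>Monotonicity of Or\<close>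

lemma inv_perm_lt:
  fixes \<pi> :: "nat \<Rightarrow> nat"
  assumes p: "\<pi> permutes S" and ab: "a \<noteq> b" and nl: "\<not> inv \<pi> b < inv \<pi> a"
  shows "inv \<pi> a < inv \<pi> b"
proof -
  have "inv \<pi> a \<noteq> inv \<pi> b" using inv_perm_inj[OF p] ab by blast
  then show ?thesis using nl by simp
qed

lemma adjacent_pair:
  assumes p: "\<pi> permutes {1..n}" and s: "\<sigma> permutes {1..n}"
    and sub: "inversions \<pi> \<subseteq> inversions \<sigma>"
    and ab0: "(a0, b0) \<in> inversions \<sigma> - inversions \<pi>"
  shows "\<exists>a b. (a, b) \<in> inversions \<sigma> - inversions \<pi> \<and> inv \<pi> b = Suc (inv \<pi> a)"
proof -
  let ?p = "inv \<pi>" and ?s = "inv \<sigma>"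
  have main: "\<forall>a b. (a, b) \<in> inversions \<sigma> - inversions \<pi> \<longrightarrow> ?p b - ?p a = d \<longrightarrow>
      (\<exists>a b. (a, b) \<in> inversions \<sigma> - inversions \<pi> \<and> ?p b = Suc (?p a))" for d
  proof (induction d rule: less_induct)
    case (less d)
    show ?case
    proof (intro allI impI)
      fix a b assume ab: "(a, b) \<in> inversions \<sigma> - inversions \<pi>" and d: "?p b - ?p a = d"
      have ab1: "a < b" "?s b < ?s a" using ab unfolding inversions_def by auto
      have inS: "a \<in> {1..n}" "b \<in> {1..n}" using inversions_in[OF s] ab by auto
      have "\<not> ?p b < ?p a" using ab ab1 unfolding inversions_def by auto
      then have pab: "?p a < ?p b" using inv_perm_lt[OF p] ab1 by simp
      show "\<exists>a b. (a, b) \<in> inversions \<sigma> - inversions \<pi> \<and> ?p b = Suc (?p a)"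
      proof (cases "?p b = Suc (?p a)")
        case True then show ?thesis using ab by blast
      next
        case False
        let ?t = "Suc (?p a)"
        have ipS: "?p b \<in> {1..n}" using permutes_in_image[OF permutes_inv[OF p]] inS by blast
        have tS: "?t \<in> {1..n}" using pab False ipS by auto
        define c where "c = \<pi> ?t"
        have pc: "?p c = ?t" unfolding c_def using permutes_inverses(2)[OF p] .
        have cS: "c \<in> {1..n}" unfolding c_def using permutes_in_image[OF p] tS by blast
        have ca: "c \<noteq> a" using pc by auto
        have cb: "c \<noteq> b" using pc False by auto
        show ?thesis
        proof (cases "?s c < ?s a")
          case True
          show ?thesis
          proof (cases "a < c")
            case True
            then have "(a, c) \<in> inversions \<sigma> - inversions \<pi>"
              using \<open>?s c < ?s a\<close> pc unfolding inversions_def by auto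
            then show ?thesis using pc by blast
          next
            case False
            then have "c < a" using ca by simp
            then have "(c, a) \<in> inversions \<pi>" using pc unfolding inversions_def by auto
            then have "(c, a) \<in> inversions \<sigma>" using sub by blast
            then show ?thesis using \<open>?s c < ?s a\<close> unfolding inversions_def by auto
          qed
        next
          case False
          then have sca: "?s a < ?s c" using inv_perm_lt[OF s] ca by simp
          show ?thesis
          proof (cases "c < b")
            case True
            have "(c, b) \<in> inversions \<sigma> - inversions \<pi>"
              using True sca ab1 pc pab False unfolding inversions_def by auto
            moreover have "?p b - ?p c < d" using d pc pab False by auto
            ultimately show ?thesis using less.IH by blast
          next
            case False
            then have "b < c" using cb by simp
            moreover have "?p c < ?p b" using pc pab \<open>?p b \<noteq> Suc (?p a)\<close> by simp
            ultimately have "(b, c) \<in> inversions \<pi>" unfolding inversions_def by auto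
            then have "(b, c) \<in> inversions \<sigma>" using sub by blast
            then show ?thesis using sca ab1 unfolding inversions_def by auto
          qed
        qed
      qed
    qed
  qed
  show ?thesis using main ab0 by blast
qed


lemma swap_step:
  fixes \<pi> :: "nat \<Rightarrow> nat"
  assumes ih: "interval_hypergraph n I" and p: "\<pi> permutes {1..n}"
    and aS: "a \<in> {1..n}" and bS: "b \<in> {1..n}" and ab: "a < b"
    and adj: "inv \<pi> b = Suc (inv \<pi> a)"
  defines "\<pi>' \<equiv> inv (inv \<pi> \<circ> transpose a b)"
  shows "\<pi>' permutes {1..n}" "inversions \<pi>' = insert (a, b) (inversions \<pi>)"
    "Or_perm I \<pi> = Or_perm I \<pi>' \<or> increasing_flip n I (Or_perm I \<pi>) (Or_perm I \<pi>')"
proof -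
  let ?p = "inv \<pi>"
  define q where "q = inv \<pi> \<circ> transpose a b"
  have pp: "?p permutes {1..n}" using permutes_inv[OF p] .
  have qp: "q permutes {1..n}" unfolding q_def
    using permutes_compose[OF permutes_swap_id[OF aS bS] pp] .
  show pi': "\<pi>' permutes {1..n}" unfolding \<pi>'_def q_def[symmetric] using permutes_inv[OF qp] .
  have iq: "inv \<pi>' = q" unfolding \<pi>'_def q_def[symmetric] using permutes_inv_inv[OF qp] .
  have qv: "q x = (if x = a then ?p b else if x = b then ?p a else ?p x)" for x
    unfolding q_def using ab by (auto simp: transpose_def)
  have pinj: "?p x = ?p y \<longleftrightarrow> x = y" for x y using inv_perm_inj[OF p] by metis
  have c1: "?p c < ?p a \<longleftrightarrow> ?p c < ?p b" if "c \<noteq> a" "c \<noteq> b" for c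
    using adj pinj[of c a] pinj[of c b] that by auto
  have c2: "?p a < ?p c \<longleftrightarrow> ?p b < ?p c" if "c \<noteq> a" "c \<noteq> b" for c
    using adj pinj[of c a] pinj[of c b] that by auto
  show "inversions \<pi>' = insert (a, b) (inversions \<pi>)"
  proof (intro set_eqI)
    fix e :: "nat \<times> nat"
    obtain x y where e: "e = (x, y)" by fastforce
    have key: "(x < y \<and> q y < q x) \<longleftrightarrow> (x = a \<and> y = b) \<or> (x < y \<and> ?p y < ?p x)"
    proof (cases "x = a")
      case xa: True
      show ?thesis
      proof (cases "y = b")
        case True then show ?thesis using xa qv[of x] qv[of y] ab adj by simp
      next
        case yb: False
        show ?thesis
        proof (cases "y = a")
          case True then show ?thesis using xa ab by simp
        next
          case False then show ?thesis using xa yb qv[of x] qv[of y] c1[of y] by simp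
        qed
      qed
    next
      case xa: False
      show ?thesis
      proof (cases "x = b")
        case xb: True
        show ?thesis
        proof (cases "y = a")
          case True then show ?thesis using xb ab by simp
        next
          case ya: False
          show ?thesis
          proof (cases "y = b")
            case True then show ?thesis using xb ab by simp
          next
            case False then show ?thesis using xa xb ya qv[of x] qv[of y] c1[of y] ab by auto
          qed
        qed
      next
        case xb: False
        show ?thesis
        proof (cases "y = a")
          case True then show ?thesis using xa xb qv[of x] qv[of y] c2[of x] by simp
        next
          case ya: False
          show ?thesis
          proof (cases "y = b")
            case True then show ?thesis using xa xb ya qv[of x] qv[of y] c2[of x] by auto
          next
            case False then show ?thesis using xa xb ya qv[of x] qv[of y] by simp
          qed
        qed
      qed
    qed
    have "(x, y) \<in> inversions \<pi>' \<longleftrightarrow> (x, y) \<in> insert (a, b) (inversions \<pi>)"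
      unfolding inversions_def iq using key by auto
    then show "e \<in> inversions \<pi>' \<longleftrightarrow> e \<in> insert (a, b) (inversions \<pi>)" using e by simp
  qed
  let ?R = "Or_perm I \<pi>" and ?Q = "Or_perm I \<pi>'"
  have OrQ: "?Q H = (if a \<in> H \<and> b \<in> H \<and> ?R H = a then b else ?R H)" if H: "H \<in> I" for H
  proof -
    let ?v = "?R H"
    have vH: "?v \<in> H" using Or_min[OF ih p H] by blast
    have vmin: "?p ?v < ?p w" if "w \<in> H" "w \<noteq> ?v" for w using Or_strict[OF ih p H that] .
    show ?thesis
    proof (cases "a \<in> H \<and> b \<in> H \<and> ?v = a")
      case True
      have "?Q H = b"
      proof (rule Or_eqI[OF ih pi' H])
        show "b \<in> H" using True by blast
        show "\<forall>w\<in>H. w \<noteq> b \<longrightarrow> inv \<pi>' b < inv \<pi>' w"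
          unfolding iq using qv vmin True adj ab by auto
      qed
      then show ?thesis using True by simp
    next
      case False
      have "?Q H = ?v"
      proof (rule Or_eqI[OF ih pi' H vH])
        show "\<forall>w\<in>H. w \<noteq> ?v \<longrightarrow> inv \<pi>' ?v < inv \<pi>' w"
        proof (intro ballI impI)
          fix w assume w: "w \<in> H" "w \<noteq> ?v"
          have lt: "?p ?v < ?p w" using vmin w .
          show "inv \<pi>' ?v < inv \<pi>' w"
          proof (cases "?v = a")
            case True
            then have "b \<notin> H" using False vH by blast
            then have "w \<noteq> b" using w by blast
            then show ?thesis unfolding iq using qv[of w] qv[of ?v] True lt w adj pinj[of w b] by auto
          next
            case va: False
            show ?thesis
            proof (cases "?v = b")
              case True
              have "a \<notin> H"
              proof
                assume "a \<in> H"
                then have "?p b < ?p a" using vmin[of a] True ab by simp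
                then show False using adj by simp
              qed
              then have "w \<noteq> a" using w by blast
              then show ?thesis unfolding iq using qv[of w] qv[of ?v] True lt w adj by auto
            next
              case vb: False
              have "?p ?v < ?p a" if "a \<in> H" using vmin[of a] that va by simp
              moreover have "?p ?v < ?p a" if "b \<in> H"
                using vmin[of b] that vb adj pinj[of ?v a] va by auto
              ultimately have h: "?p ?v < ?p a" if "w = a \<or> w = b" using that w by blast
              have qvv: "q ?v = ?p ?v" using qv[of ?v] va vb by simp
              have "q ?v < q w"
              proof (cases "w = a")
                case True then show ?thesis using qvv qv[of w] h adj by simp
              next
                case wa: False
                show ?thesis
                proof (cases "w = b")
                  case True then show ?thesis using qvv qv[of w] h ab wa by simp
                next
                  case False then show ?thesis using qvv qv[of w] lt wa by simp
                qed
              qed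
              then show ?thesis unfolding iq .
            qed
          qed
        qed
      qed
      then show ?thesis by (simp only: if_not_P[OF False])
    qed
  qed
  show "?R = ?Q \<or> increasing_flip n I ?R ?Q"
  proof (cases "?R = ?Q")
    case True then show ?thesis by simp
  next
    case False
    have "\<forall>H\<in>I. (?R H \<noteq> ?Q H \<longrightarrow> ?R H = a \<and> ?Q H = b) \<and>
                ({a, b} \<subseteq> H \<longrightarrow> (?R H = a \<longleftrightarrow> ?Q H = b))"
    proof
      fix H assume H: "H \<in> I"
      have nb: "?R H \<noteq> b" if "a \<in> H"
      proof
        assume "?R H = b"
        then have "?p b \<le> ?p a" using Or_min[OF ih p H] that by metis
        then show False using adj by simp
      qed
      show "(?R H \<noteq> ?Q H \<longrightarrow> ?R H = a \<and> ?Q H = b) \<and>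
                ({a, b} \<subseteq> H \<longrightarrow> (?R H = a \<longleftrightarrow> ?Q H = b))"
        using OrQ[OF H] nb by auto
    qed
    then show ?thesis unfolding increasing_flip_def using False aS bS ab by auto
  qed
qed


lemma Or_cong:
  fixes \<pi> \<sigma> :: "nat \<Rightarrow> nat"
  assumes ih: "interval_hypergraph n I" and p: "\<pi> permutes {1..n}" and s: "\<sigma> permutes {1..n}"
    and eq: "inversions \<pi> = inversions \<sigma>"
  shows "Or_perm I \<pi> = Or_perm I \<sigma>"
proof
  fix H
  show "Or_perm I \<pi> H = Or_perm I \<sigma> H"
  proof (cases "H \<in> I")
    case H: True
    let ?v = "Or_perm I \<sigma> H"
    have vH: "?v \<in> H" using Or_min[OF ih s H] by blast
    show ?thesis
    proof (rule Or_eqI[OF ih p H vH], intro ballI impI)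
      fix w assume w: "w \<in> H" "w \<noteq> ?v"
      have lt: "inv \<sigma> ?v < inv \<sigma> w" using Or_strict[OF ih s H w] .
      show "inv \<pi> ?v < inv \<pi> w"
      proof (cases "?v < w")
        case True
        then have "(?v, w) \<notin> inversions \<sigma>" using lt unfolding inversions_def by auto
        then have "(?v, w) \<notin> inversions \<pi>" using eq by simp
        then have "\<not> inv \<pi> w < inv \<pi> ?v" using True unfolding inversions_def by auto
        then show ?thesis using inv_perm_lt[OF p] w by metis
      next
        case False
        then have "w < ?v" using w by simp
        then have "(w, ?v) \<in> inversions \<sigma>" using lt unfolding inversions_def by auto
        then have "(w, ?v) \<in> inversions \<pi>" using eq by simp
        then show ?thesis unfolding inversions_def by auto
      qed
    qed
  next
    case False then show ?thesis by (simp add: Or_out)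
  qed
qed

lemma finite_inversions:
  assumes p: "\<pi> permutes {1..n}"
  shows "finite (inversions \<pi>)"
proof -
  have "inversions \<pi> \<subseteq> {1..n} \<times> {1..n}" using inversions_in[OF p] by auto
  then show ?thesis by (rule finite_subset) simp
qed

lemma Or_mono:
  fixes \<pi> \<sigma> :: "nat \<Rightarrow> nat"
  assumes ih: "interval_hypergraph n I" and le: "weak_le n \<pi> \<sigma>"
  shows "P_le n I (Or_perm I \<pi>) (Or_perm I \<sigma>)"
  using le
proof (induction "card (inversions \<sigma> - inversions \<pi>)" arbitrary: \<pi> rule: less_induct)
  case less
  have p: "\<pi> permutes {1..n}" and s: "\<sigma> permutes {1..n}" and sub: "inversions \<pi> \<subseteq> inversions \<sigma>"
    using less.prems unfolding weak_le_def by auto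
  have acs: "acyclic_orientation I (Or_perm I \<sigma>)" using Or_acyclic[OF ih s] .
  have acp: "acyclic_orientation I (Or_perm I \<pi>)" using Or_acyclic[OF ih p] .
  show ?case
  proof (cases "inversions \<sigma> - inversions \<pi> = {}")
    case True
    then have "inversions \<pi> = inversions \<sigma>" using sub by blast
    then have "Or_perm I \<pi> = Or_perm I \<sigma>" using Or_cong[OF ih p s] by blast
    then show ?thesis using acs unfolding P_le_def by simp
  next
    case False
    then obtain a0 b0 where "(a0, b0) \<in> inversions \<sigma> - inversions \<pi>" by auto
    then obtain a b where ab: "(a, b) \<in> inversions \<sigma> - inversions \<pi>" "inv \<pi> b = Suc (inv \<pi> a)"
      using adjacent_pair[OF p s sub] by blast
    have abS: "a \<in> {1..n}" "b \<in> {1..n}" using inversions_in[OF s] ab(1) by auto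
    have alb: "a < b" using ab(1) unfolding inversions_def by auto
    define \<pi>' where "\<pi>' = inv (inv \<pi> \<circ> transpose a b)"
    note st = swap_step[OF ih p abS alb ab(2), folded \<pi>'_def]
    have le': "weak_le n \<pi>' \<sigma>" using st(1,2) s sub ab(1) unfolding weak_le_def by auto
    have "inversions \<sigma> - inversions \<pi>' = (inversions \<sigma> - inversions \<pi>) - {(a, b)}"
      using st(2) by auto
    then have "card (inversions \<sigma> - inversions \<pi>') < card (inversions \<sigma> - inversions \<pi>)"
      using ab(1) finite_inversions[OF s]
      by (metis card_Diff1_less finite_Diff)
    then have IH: "P_le n I (Or_perm I \<pi>') (Or_perm I \<sigma>)" using less.hyps le' by blast
    then have rt: "(Or_perm I \<pi>', Or_perm I \<sigma>) \<in> (flip_rel n I)\<^sup>*" unfolding P_le_def by blast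
    have acp': "acyclic_orientation I (Or_perm I \<pi>')" using Or_acyclic[OF ih st(1)] .
    from st(3) show ?thesis
    proof
      assume "Or_perm I \<pi> = Or_perm I \<pi>'" then show ?thesis using IH by simp
    next
      assume "increasing_flip n I (Or_perm I \<pi>) (Or_perm I \<pi>')"
      then have "(Or_perm I \<pi>, Or_perm I \<pi>') \<in> flip_rel n I"
        using acp acp' unfolding flip_rel_def by blast
      then show ?thesis using rt acp acs unfolding P_le_def
        by (meson converse_rtrancl_into_rtrancl)
    qed
  qed
qed


section \<open>Meet direction: descending arcs\<close>

lemma darcs_pass:
  assumes ih: "interval_hypergraph n I" and X: "orientation I X"
    and bc: "(b, c) \<in> (darcs I X)\<^sup>+" and ca: "c < a" and ab: "a < b"
  shows "(b, a) \<in> (darcs I X)\<^sup>+"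
  using bc ca
proof (induction rule: trancl_induct)
  case (base y)
  then obtain H where H: "H \<in> I" "X H = b" "y \<in> H" unfolding darcs_def by blast
  have "b \<in> H" using X H unfolding orientation_def by blast
  then have "a \<in> H" using ih_between[OF ih H(1) H(3)] base ab by simp
  then have "(b, a) \<in> darcs I X" using H ab unfolding darcs_def by blast
  then show ?case by blast
next
  case (step y z)
  show ?case
  proof (cases "y < a")
    case True then show ?thesis using step.IH by blast
  next
    case False
    show ?thesis
    proof (cases "y = a")
      case True then show ?thesis using step.hyps by simp
    next
      case False
      then have ay: "a < y" using \<open>\<not> y < a\<close> by simp
      obtain H where H: "H \<in> I" "X H = y" "z \<in> H" using step.hyps(2) unfolding darcs_def by blast
      have "y \<in> H" using X H unfolding orientation_def by blast
      then have "a \<in> H" using ih_between[OF ih H(1) H(3)] step.prems ay by simp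
      then have "(y, a) \<in> darcs I X" using H ay unfolding darcs_def by blast
      then show ?thesis using step.hyps(1) by (meson trancl_into_trancl)
    qed
  qed
qed

lemma greedy_min:
  assumes ih: "interval_hypergraph n I" and X: "orientation I X" and wf: "wf (arcs I X)"
    and fin: "finite S"
  shows "\<exists>r::nat \<Rightarrow> nat. inj_on r S \<and> (\<forall>c\<in>S. \<forall>x\<in>S. (c, x) \<in> arcs I X \<longrightarrow> r c < r x) \<and>
           (\<forall>a\<in>S. \<forall>b\<in>S. a < b \<longrightarrow> r b < r a \<longrightarrow> (b, a) \<in> (darcs I X)\<^sup>+)"
  using fin
proof (induction S rule: finite_psubset_induct)
  case (psubset S)
  show ?case
  proof (cases "S = {}")
    case True then show ?thesis by (intro exI[of _ id]) simp
  next
    case False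
    then obtain x0 where "x0 \<in> S" by blast
    then obtain z where z: "z \<in> S" "\<And>y. (y, z) \<in> arcs I X \<Longrightarrow> y \<notin> S"
      using wfE_min[OF wf] by metis
    define Src where "Src = {b\<in>S. \<forall>c\<in>S. (c, b) \<notin> arcs I X}"
    have "z \<in> Src" using z unfolding Src_def by blast
    then have SrcNE: "Src \<noteq> {}" by blast
    have finSrc: "finite Src" using psubset.hyps unfolding Src_def by simp
    define b where "b = Min Src"
    have bSrc: "b \<in> Src" unfolding b_def using Min_in[OF finSrc SrcNE] .
    have bS: "b \<in> S" and bsrc: "\<And>c. c \<in> S \<Longrightarrow> (c, b) \<notin> arcs I X" using bSrc unfolding Src_def by auto
    have bmin: "b \<le> y" if "y \<in> Src" for y unfolding b_def using Min_le[OF finSrc that] .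
    have key: "a \<in> S \<longrightarrow> a < b \<longrightarrow> (b, a) \<in> (darcs I X)\<^sup>+" for a
      using wf
    proof (induction a rule: wf_induct_rule)
      case (less a)
      show ?case
      proof (intro impI)
        assume aS: "a \<in> S" and ab: "a < b"
        have "a \<notin> Src" using bmin ab by force
        then obtain c where cS: "c \<in> S" and ca: "(c, a) \<in> arcs I X" using aS unfolding Src_def by blast
        obtain H where H: "H \<in> I" "X H = c" "a \<in> H" "a \<noteq> c" using ca unfolding arcs_def by blast
        have cH: "c \<in> H" using X H unfolding orientation_def by blast
        show "(b, a) \<in> (darcs I X)\<^sup>+"
        proof (cases "c = b")
          case True
          then have "(b, a) \<in> darcs I X" using H ab unfolding darcs_def by blast
          then show ?thesis by blast
        next
          case cb: False
          show ?thesis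
          proof (cases "b < c")
            case True
            then have "b \<in> H" using ih_between[OF ih H(1) H(3) cH] ab by simp
            then have "(c, b) \<in> arcs I X" using H cb unfolding arcs_def by blast
            then show ?thesis using bsrc cS by blast
          next
            case False
            then have clb: "c < b" using cb by simp
            have bc: "(b, c) \<in> (darcs I X)\<^sup>+" using less.IH[OF ca] cS clb by blast
            show ?thesis
            proof (cases "a < c")
              case True
              then have "(c, a) \<in> darcs I X" using H unfolding darcs_def by blast
              then show ?thesis using bc by (meson trancl_into_trancl)
            next
              case False
              then have "c < a" using H(4) by simp
              then show ?thesis using darcs_pass[OF ih X bc _ ab] by blast
            qed
          qed
        qed
      qed
    qed
    have sub: "S - {b} \<subset> S" using bS by blast
    obtain r' :: "nat \<Rightarrow> nat" where r': "inj_on r' (S - {b})"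
      "\<forall>c\<in>S - {b}. \<forall>x\<in>S - {b}. (c, x) \<in> arcs I X \<longrightarrow> r' c < r' x"
      "\<forall>a\<in>S - {b}. \<forall>b'\<in>S - {b}. a < b' \<longrightarrow> r' b' < r' a \<longrightarrow> (b', a) \<in> (darcs I X)\<^sup>+"
      using psubset.IH[OF sub] by blast
    define r where "r v = (if v = b then 0 else Suc (r' v))" for v
    have "inj_on r S"
    proof (rule inj_onI)
      fix u v assume uv: "u \<in> S" "v \<in> S" "r u = r v"
      show "u = v"
      proof (cases "u = b \<or> v = b")
        case True then show ?thesis using uv unfolding r_def by (auto split: if_splits)
      next
        case False
        then have "r' u = r' v" using uv unfolding r_def by simp
        then show ?thesis using r'(1) uv False unfolding inj_on_def by blast
      qed
    qed
    moreover have "\<forall>c\<in>S. \<forall>x\<in>S. (c, x) \<in> arcs I X \<longrightarrow> r c < r x"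
    proof (intro ballI impI)
      fix c x assume cx: "c \<in> S" "x \<in> S" "(c, x) \<in> arcs I X"
      then have "x \<noteq> b" using bsrc by blast
      moreover have "c \<noteq> x" using cx(3) unfolding arcs_def by blast
      ultimately show "r c < r x" using r'(2) cx unfolding r_def by auto
    qed
    moreover have "\<forall>a\<in>S. \<forall>b'\<in>S. a < b' \<longrightarrow> r b' < r a \<longrightarrow> (b', a) \<in> (darcs I X)\<^sup>+"
    proof (intro ballI impI)
      fix a b' assume ab': "a \<in> S" "b' \<in> S" "a < b'" "r b' < r a"
      show "(b', a) \<in> (darcs I X)\<^sup>+"
      proof (cases "b' = b")
        case True then show ?thesis using key ab' by blast
      next
        case False
        moreover have "a \<noteq> b" using ab'(4) unfolding r_def by auto
        ultimately show ?thesis using r'(3) ab' unfolding r_def by auto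
      qed
    qed
    ultimately show ?thesis by blast
  qed
qed


lemma min_exists:
  assumes ih: "interval_hypergraph n I" and ac: "acyclic_orientation I X"
  shows "\<exists>\<mu>. \<mu> permutes {1..n} \<and> Or_perm I \<mu> = X \<and>
           (\<forall>a b. (a, b) \<in> inversions \<mu> \<longrightarrow> (b, a) \<in> (darcs I X)\<^sup>+)"
proof -
  have X: "orientation I X" using ac unfolding acyclic_orientation_def by blast
  obtain r :: "nat \<Rightarrow> nat" where r: "inj_on r {1..n}"
    "\<forall>c\<in>{1..n}. \<forall>x\<in>{1..n}. (c, x) \<in> arcs I X \<longrightarrow> r c < r x"
    "\<forall>a\<in>{1..n}. \<forall>b\<in>{1..n}. a < b \<longrightarrow> r b < r a \<longrightarrow> (b, a) \<in> (darcs I X)\<^sup>+"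
    using greedy_min[OF ih X arcs_wf[OF ih ac], of "{1..n}"] by auto
  obtain \<mu> where mu: "\<mu> permutes {1..n}"
    "\<forall>u\<in>{1..n}. \<forall>v\<in>{1..n}. inv \<mu> u < inv \<mu> v \<longleftrightarrow> r u < r v"
    using perm_of_rank[OF r(1)] by blast
  have "\<forall>(c, x)\<in>arcs I X. inv \<mu> c < inv \<mu> x"
  proof (intro ballI, clarify)
    fix c x assume cx: "(c, x) \<in> arcs I X"
    then have "c \<in> {1..n}" "x \<in> {1..n}" using arcs_sub[OF ih X] by auto
    then show "inv \<mu> c < inv \<mu> x" using r(2) mu(2) cx by blast
  qed
  then have "Or_perm I \<mu> = X" using Or_of_ext[OF ih mu(1) X] by blast
  moreover have "\<forall>a b. (a, b) \<in> inversions \<mu> \<longrightarrow> (b, a) \<in> (darcs I X)\<^sup>+"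
    using inversions_rank[OF mu] r(3) by auto
  ultimately show ?thesis using mu(1) by blast
qed

lemma darcs_ext:
  assumes ih: "interval_hypergraph n I" and p: "\<pi> permutes {1..n}"
    and cx: "(c, x) \<in> (darcs I (Or_perm I \<pi>))\<^sup>+"
  shows "inv \<pi> c < inv \<pi> x"
  using cx
proof (induction rule: trancl_induct)
  case (base y)
  then have "(c, y) \<in> arcs I (Or_perm I \<pi>)" unfolding darcs_def arcs_def by auto
  then show ?case using ext_of_Or[OF ih p] by blast
next
  case (step y z)
  then have "(y, z) \<in> arcs I (Or_perm I \<pi>)" unfolding darcs_def arcs_def by auto
  then show ?case using ext_of_Or[OF ih p] step.IH by fastforce
qed

lemma flip_darcs:
  assumes ih: "interval_hypergraph n I" and ci: "closed_initial n I"
    and acX: "acyclic_orientation I X" and acY: "acyclic_orientation I Y"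
    and fl: "increasing_flip n I X Y"
  shows "darcs I X \<subseteq> darcs I Y"
proof
  fix e assume e: "e \<in> darcs I X"
  then obtain c x H where cx: "e = (c, x)" "x < c" "H \<in> I" "X H = c" "x \<in> H"
    unfolding darcs_def by blast
  obtain i j where ij: "1 \<le> i" "i < j" "j \<le> n"
    and fl2: "\<forall>H\<in>I. (X H \<noteq> Y H \<longrightarrow> X H = i \<and> Y H = j) \<and> ({i, j} \<subseteq> H \<longrightarrow> (X H = i \<longleftrightarrow> Y H = j))"
    using fl unfolding increasing_flip_def by blast
  have oX: "orientation I X" and oY: "orientation I Y"
    using acX acY unfolding acyclic_orientation_def by auto
  show "e \<in> darcs I Y"
  proof (cases "Y H = X H")
    case True then show ?thesis using cx unfolding darcs_def by auto
  next
    case False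
    then have XH: "X H = i" and YH: "Y H = j" using fl2 cx(3) by metis+
    have jH: "j \<in> H" using oY cx(3) YH unfolding orientation_def by metis
    obtain l r where lr: "H = {l..r}" "1 \<le> l" "l \<le> r" "r \<le> n" using ih_interval[OF ih cx(3)] by blast
    have ci_: "c = i" using cx XH by simp
    have "l < i" "i < r" using lr cx(5) cx(2) jH ij ci_ by auto
    then have G: "{l..i} \<in> I" using ci lr cx(3) unfolding closed_initial_def by blast
    have XG: "X {l..i} = i"
    proof (rule ccontr)
      assume ne: "X {l..i} \<noteq> i"
      have vG: "X {l..i} \<in> {l..i}" using oX G unfolding orientation_def by blast
      have "X H \<in> {l..i} - {X {l..i}}" using XH ne \<open>l < i\<close> by auto
      moreover have "X {l..i} \<in> H - {X H}" using vG XH ne lr \<open>i < r\<close> by auto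
      ultimately show False using two_cycle[OF acX G cx(3)] by blast
    qed
    have YG: "Y {l..i} = i"
    proof (rule ccontr)
      assume "Y {l..i} \<noteq> i"
      then have "Y {l..i} = j" using fl2 G XG by metis
      moreover have "Y {l..i} \<in> {l..i}" using oY G unfolding orientation_def by blast
      ultimately show False using ij by auto
    qed
    have "x \<in> {l..i}" using cx lr ci_ by auto
    then show ?thesis using G YG cx ci_ unfolding darcs_def by blast
  qed
qed

lemma P_le_darcs:
  assumes ih: "interval_hypergraph n I" and ci: "closed_initial n I" and le: "P_le n I X Y"
  shows "darcs I X \<subseteq> darcs I Y"
proof -
  have "(X, Y) \<in> (flip_rel n I)\<^sup>*" using le unfolding P_le_def by blast
  then show ?thesis
  proof (induction rule: rtrancl_induct)
    case base then show ?case by simp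
  next
    case (step Y Z)
    then have "darcs I Y \<subseteq> darcs I Z" using flip_darcs[OF ih ci] unfolding flip_rel_def by blast
    then show ?case using step.IH by blast
  qed
qed

lemma meet_if:
  assumes ih: "interval_hypergraph n I" and ci: "closed_initial n I"
  shows "meet_morphism {\<pi>. \<pi> permutes {1..n}} (weak_le n)
            {Rr. acyclic_orientation I Rr} (P_le n I) (Or_perm I)"
  unfolding meet_morphism_def
proof (intro ballI allI impI)
  fix a b m assume aA: "a \<in> {\<pi>. \<pi> permutes {1..n}}" and bA: "b \<in> {\<pi>. \<pi> permutes {1..n}}"
    and mt: "is_meet {\<pi>. \<pi> permutes {1..n}} (weak_le n) a b m"
  have mA: "m permutes {1..n}" and ma: "weak_le n m a" and mb: "weak_le n m b"
    and glb: "\<forall>x\<in>{\<pi>. \<pi> permutes {1..n}}. weak_le n x a \<and> weak_le n x b \<longrightarrow> weak_le n x m"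
    using mt unfolding is_meet_def by auto
  have pa: "a permutes {1..n}" and pb: "b permutes {1..n}" using aA bA by auto
  have lb: "P_le n I X (Or_perm I m)"
    if X: "X \<in> {Rr. acyclic_orientation I Rr}" and Xa: "P_le n I X (Or_perm I a)"
      and Xb: "P_le n I X (Or_perm I b)" for X
  proof -
    have acX: "acyclic_orientation I X" using X by simp
    obtain \<mu> where mu: "\<mu> permutes {1..n}" "Or_perm I \<mu> = X"
      "\<forall>u v. (u, v) \<in> inversions \<mu> \<longrightarrow> (v, u) \<in> (darcs I X)\<^sup>+"
      using min_exists[OF ih acX] by blast
    have below: "weak_le n \<mu> c" if pc: "c permutes {1..n}" and Xc: "P_le n I X (Or_perm I c)" for c
    proof -
      have sub: "(darcs I X)\<^sup>+ \<subseteq> (darcs I (Or_perm I c))\<^sup>+"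
        using trancl_mono P_le_darcs[OF ih ci Xc] by blast
      have "inversions \<mu> \<subseteq> inversions c"
      proof clarify
        fix u v assume uv: "(u, v) \<in> inversions \<mu>"
        then have "(v, u) \<in> (darcs I (Or_perm I c))\<^sup>+" using mu(3) sub by blast
        then have "inv c v < inv c u" using darcs_ext[OF ih pc] by blast
        moreover have "u < v" using uv unfolding inversions_def by simp
        ultimately show "(u, v) \<in> inversions c" unfolding inversions_def by simp
      qed
      then show ?thesis using mu(1) pc unfolding weak_le_def by blast
    qed
    have "weak_le n \<mu> m" using glb below[OF pa Xa] below[OF pb Xb] mu(1) by blast
    then show ?thesis using Or_mono[OF ih] mu(2) by metis
  qed
  show "is_meet {Rr. acyclic_orientation I Rr} (P_le n I) (Or_perm I a) (Or_perm I b) (Or_perm I m)"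
    unfolding is_meet_def using Or_acyclic[OF ih mA] Or_mono[OF ih ma] Or_mono[OF ih mb] lb by blast
qed


section \<open>Join direction: ascending arcs\<close>

lemma uarcs_pass:
  assumes ih: "interval_hypergraph n I" and X: "orientation I X"
    and bc: "(b, c) \<in> (uarcs I X)\<^sup>+" and ca: "a < c" and ab: "b < a"
  shows "(b, a) \<in> (uarcs I X)\<^sup>+"
  using bc ca
proof (induction rule: trancl_induct)
  case (base y)
  then obtain H where H: "H \<in> I" "X H = b" "y \<in> H" unfolding uarcs_def by blast
  have bH: "b \<in> H" using X H unfolding orientation_def by blast
  have "a \<in> H" using ih_between[OF ih H(1) bH H(3)] base ab by simp
  then have "(b, a) \<in> uarcs I X" using H ab unfolding uarcs_def by blast
  then show ?case by blast
next
  case (step y z)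
  show ?case
  proof (cases "a < y")
    case True then show ?thesis using step.IH by blast
  next
    case False
    show ?thesis
    proof (cases "y = a")
      case True then show ?thesis using step.hyps by simp
    next
      case False
      then have ay: "y < a" using \<open>\<not> a < y\<close> by simp
      obtain H where H: "H \<in> I" "X H = y" "z \<in> H" using step.hyps(2) unfolding uarcs_def by blast
      have yH: "y \<in> H" using X H unfolding orientation_def by blast
      have "a \<in> H" using ih_between[OF ih H(1) yH H(3)] step.prems ay by simp
      then have "(y, a) \<in> uarcs I X" using H ay unfolding uarcs_def by blast
      then show ?thesis using step.hyps(1) by (meson trancl_into_trancl)
    qed
  qed
qed

lemma greedy_max:
  assumes ih: "interval_hypergraph n I" and X: "orientation I X" and wf: "wf (arcs I X)"
    and fin: "finite S"
  shows "\<exists>r::nat \<Rightarrow> nat. inj_on r S \<and> (\<forall>c\<in>S. \<forall>x\<in>S. (c, x) \<in> arcs I X \<longrightarrow> r c < r x) \<and>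
           (\<forall>a\<in>S. \<forall>b\<in>S. a < b \<longrightarrow> r a < r b \<longrightarrow> (a, b) \<in> (uarcs I X)\<^sup>+)"
  using fin
proof (induction S rule: finite_psubset_induct)
  case (psubset S)
  show ?case
  proof (cases "S = {}")
    case True then show ?thesis by (intro exI[of _ id]) simp
  next
    case False
    then obtain x0 where "x0 \<in> S" by blast
    then obtain z where z: "z \<in> S" "\<And>y. (y, z) \<in> arcs I X \<Longrightarrow> y \<notin> S"
      using wfE_min[OF wf] by metis
    define Src where "Src = {b\<in>S. \<forall>c\<in>S. (c, b) \<notin> arcs I X}"
    have "z \<in> Src" using z unfolding Src_def by blast
    then have SrcNE: "Src \<noteq> {}" by blast
    have finSrc: "finite Src" using psubset.hyps unfolding Src_def by simp
    define b where "b = Max Src"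
    have bSrc: "b \<in> Src" unfolding b_def using Max_in[OF finSrc SrcNE] .
    have bS: "b \<in> S" and bsrc: "\<And>c. c \<in> S \<Longrightarrow> (c, b) \<notin> arcs I X" using bSrc unfolding Src_def by auto
    have bmax: "y \<le> b" if "y \<in> Src" for y unfolding b_def using Max_ge[OF finSrc that] .
    have key: "a \<in> S \<longrightarrow> b < a \<longrightarrow> (b, a) \<in> (uarcs I X)\<^sup>+" for a
      using wf
    proof (induction a rule: wf_induct_rule)
      case (less a)
      show ?case
      proof (intro impI)
        assume aS: "a \<in> S" and ab: "b < a"
        have "a \<notin> Src" using bmax ab by force
        then obtain c where cS: "c \<in> S" and ca: "(c, a) \<in> arcs I X" using aS unfolding Src_def by blast
        obtain H where H: "H \<in> I" "X H = c" "a \<in> H" "a \<noteq> c" using ca unfolding arcs_def by blast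
        have cH: "c \<in> H" using X H unfolding orientation_def by blast
        show "(b, a) \<in> (uarcs I X)\<^sup>+"
        proof (cases "c = b")
          case True
          then have "(b, a) \<in> uarcs I X" using H ab unfolding uarcs_def by blast
          then show ?thesis by blast
        next
          case cb: False
          show ?thesis
          proof (cases "c < b")
            case True
            then have "b \<in> H" using ih_between[OF ih H(1) cH H(3)] ab by simp
            then have "(c, b) \<in> arcs I X" using H cb unfolding arcs_def by blast
            then show ?thesis using bsrc cS by blast
          next
            case False
            then have clb: "b < c" using cb by simp
            have bc: "(b, c) \<in> (uarcs I X)\<^sup>+" using less.IH[OF ca] cS clb by blast
            show ?thesis
            proof (cases "c < a")
              case True
              then have "(c, a) \<in> uarcs I X" using H unfolding uarcs_def by blast
              then show ?thesis using bc by (meson trancl_into_trancl)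
            next
              case False
              then have "a < c" using H(4) by simp
              then show ?thesis using uarcs_pass[OF ih X bc _ ab] by blast
            qed
          qed
        qed
      qed
    qed
    have sub: "S - {b} \<subset> S" using bS by blast
    obtain r' :: "nat \<Rightarrow> nat" where r': "inj_on r' (S - {b})"
      "\<forall>c\<in>S - {b}. \<forall>x\<in>S - {b}. (c, x) \<in> arcs I X \<longrightarrow> r' c < r' x"
      "\<forall>a\<in>S - {b}. \<forall>b'\<in>S - {b}. a < b' \<longrightarrow> r' a < r' b' \<longrightarrow> (a, b') \<in> (uarcs I X)\<^sup>+"
      using psubset.IH[OF sub] by blast
    define r where "r v = (if v = b then 0 else Suc (r' v))" for v
    have "inj_on r S"
    proof (rule inj_onI)
      fix u v assume uv: "u \<in> S" "v \<in> S" "r u = r v"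
      show "u = v"
      proof (cases "u = b \<or> v = b")
        case True then show ?thesis using uv unfolding r_def by (auto split: if_splits)
      next
        case False
        then have "r' u = r' v" using uv unfolding r_def by simp
        then show ?thesis using r'(1) uv False unfolding inj_on_def by blast
      qed
    qed
    moreover have "\<forall>c\<in>S. \<forall>x\<in>S. (c, x) \<in> arcs I X \<longrightarrow> r c < r x"
    proof (intro ballI impI)
      fix c x assume cx: "c \<in> S" "x \<in> S" "(c, x) \<in> arcs I X"
      then have "x \<noteq> b" using bsrc by blast
      moreover have "c \<noteq> x" using cx(3) unfolding arcs_def by blast
      ultimately show "r c < r x" using r'(2) cx unfolding r_def by auto
    qed
    moreover have "\<forall>a\<in>S. \<forall>b'\<in>S. a < b' \<longrightarrow> r a < r b' \<longrightarrow> (a, b') \<in> (uarcs I X)\<^sup>+"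
    proof (intro ballI impI)
      fix a b' assume ab': "a \<in> S" "b' \<in> S" "a < b'" "r a < r b'"
      show "(a, b') \<in> (uarcs I X)\<^sup>+"
      proof (cases "a = b")
        case True then show ?thesis using key ab' by blast
      next
        case False
        moreover have "b' \<noteq> b" using ab'(4) unfolding r_def by auto
        ultimately show ?thesis using r'(3) ab' unfolding r_def by auto
      qed
    qed
    ultimately show ?thesis by blast
  qed
qed

lemma max_exists:
  assumes ih: "interval_hypergraph n I" and ac: "acyclic_orientation I X"
  shows "\<exists>\<mu>. \<mu> permutes {1..n} \<and> Or_perm I \<mu> = X \<and>
           (\<forall>a\<in>{1..n}. \<forall>b\<in>{1..n}. a < b \<longrightarrow> (a, b) \<notin> inversions \<mu> \<longrightarrow> (a, b) \<in> (uarcs I X)\<^sup>+)"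
proof -
  have X: "orientation I X" using ac unfolding acyclic_orientation_def by blast
  obtain r :: "nat \<Rightarrow> nat" where r: "inj_on r {1..n}"
    "\<forall>c\<in>{1..n}. \<forall>x\<in>{1..n}. (c, x) \<in> arcs I X \<longrightarrow> r c < r x"
    "\<forall>a\<in>{1..n}. \<forall>b\<in>{1..n}. a < b \<longrightarrow> r a < r b \<longrightarrow> (a, b) \<in> (uarcs I X)\<^sup>+"
    using greedy_max[OF ih X arcs_wf[OF ih ac], of "{1..n}"] by auto
  obtain \<mu> where mu: "\<mu> permutes {1..n}"
    "\<forall>u\<in>{1..n}. \<forall>v\<in>{1..n}. inv \<mu> u < inv \<mu> v \<longleftrightarrow> r u < r v"
    using perm_of_rank[OF r(1)] by blast
  have "\<forall>(c, x)\<in>arcs I X. inv \<mu> c < inv \<mu> x"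
  proof (intro ballI, clarify)
    fix c x assume cx: "(c, x) \<in> arcs I X"
    then have "c \<in> {1..n}" "x \<in> {1..n}" using arcs_sub[OF ih X] by auto
    then show "inv \<mu> c < inv \<mu> x" using r(2) mu(2) cx by blast
  qed
  then have "Or_perm I \<mu> = X" using Or_of_ext[OF ih mu(1) X] by blast
  moreover have "\<forall>a\<in>{1..n}. \<forall>b\<in>{1..n}. a < b \<longrightarrow> (a, b) \<notin> inversions \<mu> \<longrightarrow> (a, b) \<in> (uarcs I X)\<^sup>+"
  proof (intro ballI impI)
    fix a b assume ab: "a \<in> {1..n}" "b \<in> {1..n}" "a < b" "(a, b) \<notin> inversions \<mu>"
    have "r b < r a \<longrightarrow> (a, b) \<in> inversions \<mu>" unfolding inversions_rank[OF mu] using ab(1-3) by simp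
    then have "\<not> r b < r a" using ab(4) by blast
    moreover have "r a \<noteq> r b"
    proof
      assume "r a = r b"
      then have "a = b" using inj_onD[OF r(1)] ab(1,2) by blast
      then show False using ab(3) by simp
    qed
    ultimately have "r a < r b" by simp
    then show "(a, b) \<in> (uarcs I X)\<^sup>+" using r(3) ab by blast
  qed
  ultimately show ?thesis using mu(1) by blast
qed

lemma uarcs_ext:
  assumes ih: "interval_hypergraph n I" and p: "\<pi> permutes {1..n}"
    and cx: "(c, x) \<in> (uarcs I (Or_perm I \<pi>))\<^sup>+"
  shows "inv \<pi> c < inv \<pi> x"
  using cx
proof (induction rule: trancl_induct)
  case (base y)
  then have "(c, y) \<in> arcs I (Or_perm I \<pi>)" unfolding uarcs_def arcs_def by auto
  then show ?case using ext_of_Or[OF ih p] by blast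
next
  case (step y z)
  then have "(y, z) \<in> arcs I (Or_perm I \<pi>)" unfolding uarcs_def arcs_def by auto
  then show ?case using ext_of_Or[OF ih p] step.IH by fastforce
qed

lemma flip_uarcs:
  assumes ih: "interval_hypergraph n I" and cf: "closed_final n I"
    and acX: "acyclic_orientation I X" and acY: "acyclic_orientation I Y"
    and fl: "increasing_flip n I X Y"
  shows "uarcs I Y \<subseteq> uarcs I X"
proof
  fix e assume e: "e \<in> uarcs I Y"
  then obtain c x H where cx: "e = (c, x)" "c < x" "H \<in> I" "Y H = c" "x \<in> H"
    unfolding uarcs_def by blast
  obtain i j where ij: "1 \<le> i" "i < j" "j \<le> n"
    and fl2: "\<forall>H\<in>I. (X H \<noteq> Y H \<longrightarrow> X H = i \<and> Y H = j) \<and> ({i, j} \<subseteq> H \<longrightarrow> (X H = i \<longleftrightarrow> Y H = j))"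
    using fl unfolding increasing_flip_def by blast
  have oX: "orientation I X" and oY: "orientation I Y"
    using acX acY unfolding acyclic_orientation_def by auto
  show "e \<in> uarcs I X"
  proof (cases "Y H = X H")
    case True then show ?thesis using cx unfolding uarcs_def by auto
  next
    case False
    then have XH: "X H = i" and YH: "Y H = j" using fl2 cx(3) by metis+
    have iH: "i \<in> H" using oX cx(3) XH unfolding orientation_def by metis
    obtain l r where lr: "H = {l..r}" "1 \<le> l" "l \<le> r" "r \<le> n" using ih_interval[OF ih cx(3)] by blast
    have cj: "c = j" using cx YH by simp
    have "l < j" "j < r" using lr cx(5) cx(2) iH ij cj by auto
    then have G: "{j..r} \<in> I" using cf lr cx(3) unfolding closed_final_def by blast
    have YG: "Y {j..r} = j"
    proof (rule ccontr)
      assume ne: "Y {j..r} \<noteq> j"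
      have vG: "Y {j..r} \<in> {j..r}" using oY G unfolding orientation_def by blast
      have "Y H \<in> {j..r} - {Y {j..r}}" using YH ne \<open>j < r\<close> by auto
      moreover have "Y {j..r} \<in> H - {Y H}" using vG YH ne lr \<open>l < j\<close> by auto
      ultimately show False using two_cycle[OF acY G cx(3)] by blast
    qed
    have XG: "X {j..r} = j"
    proof (rule ccontr)
      assume "X {j..r} \<noteq> j"
      then have "X {j..r} = i" using fl2 G YG by metis
      moreover have "X {j..r} \<in> {j..r}" using oX G unfolding orientation_def by blast
      ultimately show False using ij by auto
    qed
    have "x \<in> {j..r}" using cx lr cj by auto
    then show ?thesis using G XG cx cj unfolding uarcs_def by blast
  qed
qed

lemma P_le_uarcs:
  assumes ih: "interval_hypergraph n I" and cf: "closed_final n I" and le: "P_le n I X Y"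
  shows "uarcs I Y \<subseteq> uarcs I X"
proof -
  have "(X, Y) \<in> (flip_rel n I)\<^sup>*" using le unfolding P_le_def by blast
  then show ?thesis
  proof (induction rule: rtrancl_induct)
    case base then show ?case by simp
  next
    case (step Y Z)
    then have "uarcs I Z \<subseteq> uarcs I Y" using flip_uarcs[OF ih cf] unfolding flip_rel_def by blast
    then show ?case using step.IH by blast
  qed
qed

lemma join_if:
  assumes ih: "interval_hypergraph n I" and cf: "closed_final n I"
  shows "join_morphism {\<pi>. \<pi> permutes {1..n}} (weak_le n)
            {Rr. acyclic_orientation I Rr} (P_le n I) (Or_perm I)"
  unfolding join_morphism_def
proof (intro ballI allI impI)
  fix a b m assume aA: "a \<in> {\<pi>. \<pi> permutes {1..n}}" and bA: "b \<in> {\<pi>. \<pi> permutes {1..n}}"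
    and mt: "is_join {\<pi>. \<pi> permutes {1..n}} (weak_le n) a b m"
  have mA: "m permutes {1..n}" and ma: "weak_le n a m" and mb: "weak_le n b m"
    and lub: "\<forall>x\<in>{\<pi>. \<pi> permutes {1..n}}. weak_le n a x \<and> weak_le n b x \<longrightarrow> weak_le n m x"
    using mt unfolding is_join_def by auto
  have pa: "a permutes {1..n}" and pb: "b permutes {1..n}" using aA bA by auto
  have ub: "P_le n I (Or_perm I m) X"
    if X: "X \<in> {Rr. acyclic_orientation I Rr}" and Xa: "P_le n I (Or_perm I a) X"
      and Xb: "P_le n I (Or_perm I b) X" for X
  proof -
    have acX: "acyclic_orientation I X" using X by simp
    obtain \<mu> where mu: "\<mu> permutes {1..n}" "Or_perm I \<mu> = X"
      "\<forall>u\<in>{1..n}. \<forall>v\<in>{1..n}. u < v \<longrightarrow> (u, v) \<notin> inversions \<mu> \<longrightarrow> (u, v) \<in> (uarcs I X)\<^sup>+"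
      using max_exists[OF ih acX] by blast
    have above: "weak_le n c \<mu>" if pc: "c permutes {1..n}" and Xc: "P_le n I (Or_perm I c) X" for c
    proof -
      have sub: "(uarcs I X)\<^sup>+ \<subseteq> (uarcs I (Or_perm I c))\<^sup>+"
        using trancl_mono P_le_uarcs[OF ih cf Xc] by blast
      have "inversions c \<subseteq> inversions \<mu>"
      proof clarify
        fix u v assume uv: "(u, v) \<in> inversions c"
        have uvS: "u \<in> {1..n}" "v \<in> {1..n}" using inversions_in[OF pc uv] by auto
        have lt: "u < v" "inv c v < inv c u" using uv unfolding inversions_def by auto
        show "(u, v) \<in> inversions \<mu>"
        proof (rule ccontr)
          assume "(u, v) \<notin> inversions \<mu>"
          then have "(u, v) \<in> (uarcs I (Or_perm I c))\<^sup>+" using mu(3) uvS lt sub by blast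
          then have "inv c u < inv c v" using uarcs_ext[OF ih pc] by blast
          then show False using lt by simp
        qed
      qed
      then show ?thesis using mu(1) pc unfolding weak_le_def by blast
    qed
    have "weak_le n m \<mu>" using lub above[OF pa Xa] above[OF pb Xb] mu(1) by blast
    then show ?thesis using Or_mono[OF ih] mu(2) by metis
  qed
  show "is_join {Rr. acyclic_orientation I Rr} (P_le n I) (Or_perm I a) (Or_perm I b) (Or_perm I m)"
    unfolding is_join_def using Or_acyclic[OF ih mA] Or_mono[OF ih ma] Or_mono[OF ih mb] ub by blast
qed


section \<open>Counterexamples\<close>

lemma Or_rank:
  fixes r :: "nat \<Rightarrow> nat"
  assumes ih: "interval_hypergraph n I" and p: "\<pi> permutes {1..n}"
    and rk: "\<forall>u\<in>{1..n}. \<forall>v\<in>{1..n}. inv \<pi> u < inv \<pi> v \<longleftrightarrow> r u < r v"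
    and H: "H \<in> I" and v: "v \<in> H" and min: "\<forall>w\<in>H. w \<noteq> v \<longrightarrow> r v < r w"
  shows "Or_perm I \<pi> H = v"
proof (rule Or_eqI[OF ih p H v], intro ballI impI)
  fix w assume w: "w \<in> H" "w \<noteq> v"
  have "v \<in> {1..n}" "w \<in> {1..n}" using ih_sub[OF ih H] v w by auto
  then show "inv \<pi> v < inv \<pi> w" using rk min w by blast
qed

lemma P_le_le:
  assumes le: "P_le n I R Q" and H: "H \<in> I"
  shows "R H \<le> Q H"
proof -
  have "(R, Q) \<in> (flip_rel n I)\<^sup>*" using le unfolding P_le_def by blast
  then show ?thesis
  proof (induction rule: rtrancl_induct)
    case base then show ?case by simp
  next
    case (step Y Z)
    then have "increasing_flip n I Y Z" unfolding flip_rel_def by blast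
    then obtain i j where "i < j" "Y H \<noteq> Z H \<longrightarrow> Y H = i \<and> Z H = j"
      unfolding increasing_flip_def using H by blast
    then have "Y H \<le> Z H" by (cases "Y H = Z H") auto
    then show ?case using step.IH by simp
  qed
qed

definition rk3 :: "nat \<Rightarrow> nat \<Rightarrow> nat \<Rightarrow> nat \<Rightarrow> nat \<Rightarrow> nat \<Rightarrow> nat" where
  "rk3 n i a b c v = (if v < i then v else if v = a then n+1 else if v = b then n+2 else if v = c then n+3 else n+3+v)"

lemma rk3_inj:
  assumes "i \<le> a" "i \<le> b" "i \<le> c" "a \<noteq> b" "a \<noteq> c" "b \<noteq> c" "i \<le> n" "1 \<le> i"
  shows "inj_on (rk3 n i a b c) {1..n}"
proof (rule inj_onI)
  fix x y assume xS: "x \<in> {1..n}" and yS: "y \<in> {1..n}" and xy: "rk3 n i a b c x = rk3 n i a b c y"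
  have A: "v < i \<Longrightarrow> rk3 n i a b c v = v" for v by (simp add: rk3_def)
  have B: "\<not> v < i \<Longrightarrow> rk3 n i a b c v \<ge> n + 1" for v by (simp add: rk3_def)
  have C: "\<not> v < i \<Longrightarrow> rk3 n i a b c v = n + 1 \<longleftrightarrow> v = a" for v using assms by (simp add: rk3_def)
  have D: "\<not> v < i \<Longrightarrow> rk3 n i a b c v = n + 2 \<longleftrightarrow> v = b" for v using assms by (simp add: rk3_def)
  have E: "\<not> v < i \<Longrightarrow> rk3 n i a b c v = n + 3 \<longleftrightarrow> v = c" for v using assms by (simp add: rk3_def)
  have F: "\<not> v < i \<Longrightarrow> v \<noteq> a \<Longrightarrow> v \<noteq> b \<Longrightarrow> v \<noteq> c \<Longrightarrow> rk3 n i a b c v = n + 3 + v" for v by (simp add: rk3_def)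
  show "x = y"
  proof (cases "x < i")
    case xi: True
    have fx: "rk3 n i a b c x = x" using A[OF xi] .
    show ?thesis
    proof (cases "y < i")
      case True then show ?thesis using fx A[OF True] xy by linarith
    next
      case False then show ?thesis using fx B[OF False] xy xi assms(7) by linarith
    qed
  next
    case xi: False
    show ?thesis
    proof (cases "y < i")
      case True then show ?thesis using A[OF True] B[OF xi] xy True assms(7) by linarith
    next
      case yi: False
      show ?thesis
      proof (cases "x = a \<or> x = b \<or> x = c")
        case True
        then show ?thesis
        proof (elim disjE)
          assume "x = a" then have "rk3 n i a b c y = n + 1" using xy C[OF xi] by simp
          then show ?thesis using C[OF yi] \<open>x = a\<close> by simp
        next
          assume "x = b" then have "rk3 n i a b c y = n + 2" using xy D[OF xi] by simp
          then show ?thesis using D[OF yi] \<open>x = b\<close> by simp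
        next
          assume "x = c" then have "rk3 n i a b c y = n + 3" using xy E[OF xi] by simp
          then show ?thesis using E[OF yi] \<open>x = c\<close> by simp
        qed
      next
        case nx: False
        then have fx: "rk3 n i a b c x = n + 3 + x" using F xi by blast
        show ?thesis
        proof (cases "y = a \<or> y = b \<or> y = c")
          case True
          then have "rk3 n i a b c y \<le> n + 3" using C[OF yi] D[OF yi] E[OF yi] by auto
          moreover have "x \<ge> 1" using xS by simp
          ultimately show ?thesis using fx xy by linarith
        next
          case False
          then have "rk3 n i a b c y = n + 3 + y" using F yi by blast
          then show ?thesis using fx xy by linarith
        qed
      qed
    qed
  qed
qed

lemma rk3_t1: assumes "i < j" "j < k" "k \<le> n" "x < y" "rk3 n i i j k y < rk3 n i i j k x"
  shows "rk3 n i j i k y < rk3 n i j i k x"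
  using assms unfolding rk3_def by (auto split: if_splits)
lemma rk3_t2: assumes "i < j" "j < k" "k \<le> n" "x < y" "rk3 n i i j k y < rk3 n i i j k x"
  shows "rk3 n i k i j y < rk3 n i k i j x"
  using assms unfolding rk3_def by (auto split: if_splits)
lemma rk3_t3: assumes "i < j" "j < k" "k \<le> n" "x < y" "rk3 n i j i k y < rk3 n i j i k x"
    "rk3 n i k i j y < rk3 n i k i j x"
  shows "rk3 n i i j k y < rk3 n i i j k x"
  using assms unfolding rk3_def by (auto split: if_splits)
lemma rk3_t4: assumes "i < j" "j < k" "k \<le> n" "x < y" "rk3 n i j i k y < rk3 n i j i k x"
  shows "rk3 n i k j i y < rk3 n i k j i x"
  using assms unfolding rk3_def by (auto split: if_splits)

lemma meet_only_if:
  assumes ih: "interval_hypergraph n I"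
    and mm: "meet_morphism {\<pi>. \<pi> permutes {1..n}} (weak_le n)
            {Rr. acyclic_orientation I Rr} (P_le n I) (Or_perm I)"
  shows "closed_initial n I"
proof (rule ccontr)
  assume nci: "\<not> closed_initial n I"
  define V where "V i j k \<longleftrightarrow> 1 \<le> i \<and> i < j \<and> j < k \<and> k \<le> n \<and> {i..k} \<in> I \<and> {i..j} \<notin> I" for i j k :: nat
  have ex: "\<exists>k i j. V i j k" using nci unfolding closed_initial_def V_def by blast
  define k where "k = (LEAST k. \<exists>i j. V i j k)"
  obtain i j where Vijk: "V i j k" using LeastI_ex[OF ex] unfolding k_def by blast
  have kmin: "k \<le> k'" if "V i' j' k'" for i' j' k' unfolding k_def using that by (blast intro: Least_le)
  have i1: "1 \<le> i" and ij: "i < j" and jk: "j < k" and kn: "k \<le> n"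
    and Hk: "{i..k} \<in> I" and Hj: "{i..j} \<notin> I" using Vijk unfolding V_def by auto
  have inS: "i \<le> n" using ij jk kn by simp
  obtain \<pi> where p: "\<pi> permutes {1..n}"
    "\<forall>u\<in>{1..n}. \<forall>v\<in>{1..n}. inv \<pi> u < inv \<pi> v \<longleftrightarrow> rk3 n i j i k u < rk3 n i j i k v"
    using perm_of_rank[OF rk3_inj[of i j i k n]] ij jk inS i1 by auto
  obtain \<sigma> where s: "\<sigma> permutes {1..n}"
    "\<forall>u\<in>{1..n}. \<forall>v\<in>{1..n}. inv \<sigma> u < inv \<sigma> v \<longleftrightarrow> rk3 n i k i j u < rk3 n i k i j v"
    using perm_of_rank[OF rk3_inj[of i k i j n]] ij jk inS i1 by auto
  obtain m where m: "m permutes {1..n}"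
    "\<forall>u\<in>{1..n}. \<forall>v\<in>{1..n}. inv m u < inv m v \<longleftrightarrow> rk3 n i i j k u < rk3 n i i j k v"
    using perm_of_rank[OF rk3_inj[of i i j k n]] ij jk inS i1 by auto
  obtain \<rho> where r: "\<rho> permutes {1..n}"
    "\<forall>u\<in>{1..n}. \<forall>v\<in>{1..n}. inv \<rho> u < inv \<rho> v \<longleftrightarrow> rk3 n i k j i u < rk3 n i k j i v"
    using perm_of_rank[OF rk3_inj[of i k j i n]] ij jk inS i1 by auto
  note Ip = inversions_rank[OF p] and Is = inversions_rank[OF s]
    and Im = inversions_rank[OF m] and Ir = inversions_rank[OF r]
  have mp: "inversions m \<subseteq> inversions \<pi>" unfolding Ip Im using rk3_t1[OF ij jk kn] by auto
  have ms: "inversions m \<subseteq> inversions \<sigma>" unfolding Is Im using rk3_t2[OF ij jk kn] by auto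
  have psm: "inversions \<pi> \<inter> inversions \<sigma> \<subseteq> inversions m" unfolding Ip Is Im using rk3_t3[OF ij jk kn] by auto
  have pr: "inversions \<pi> \<subseteq> inversions \<rho>" unfolding Ip Ir using rk3_t4[OF ij jk kn] by auto
  have "is_meet {\<pi>. \<pi> permutes {1..n}} (weak_le n) \<pi> \<sigma> m"
    unfolding is_meet_def weak_le_def using p(1) s(1) m(1) mp ms psm by blast
  then have im: "is_meet {Rr. acyclic_orientation I Rr} (P_le n I) (Or_perm I \<pi>) (Or_perm I \<sigma>) (Or_perm I m)"
    using mm p(1) s(1) unfolding meet_morphism_def by blast
  have rs: "Or_perm I \<rho> = Or_perm I \<sigma>"
  proof
    fix H show "Or_perm I \<rho> H = Or_perm I \<sigma> H"
    proof (cases "H \<in> I")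
      case False then show ?thesis by (simp add: Or_out)
    next
      case H: True
      have both: "Or_perm I \<rho> H = Or_perm I \<sigma> H"
        if "v \<in> H" "\<forall>w\<in>H. w \<noteq> v \<longrightarrow> rk3 n i k j i v < rk3 n i k j i w"
          "\<forall>w\<in>H. w \<noteq> v \<longrightarrow> rk3 n i k i j v < rk3 n i k i j w" for v
        using Or_rank[OF ih r H that(1,2)] Or_rank[OF ih s H that(1,3)] by simp
      obtain l rr where lr: "H = {l..rr}" "1 \<le> l" "l \<le> rr" "rr \<le> n" using ih_interval[OF ih H] by blast
      show ?thesis
      proof (cases "l < i")
        case True
        show ?thesis by (rule both[of l]) (use True lr inS in \<open>auto simp: rk3_def\<close>)
      next
        case li: False
        show ?thesis
        proof (cases "k \<in> H")
          case True
          show ?thesis by (rule both[of k]) (use True lr li ij jk in \<open>auto simp: rk3_def\<close>)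
        next
          case nk: False
          show ?thesis
          proof (cases "i \<in> H")
            case iH: True
            have l_eq: "l = i" using iH li lr by auto
            have "rr < k" using nk lr l_eq ij jk by auto
            have nj: "j \<notin> H"
            proof
              assume "j \<in> H"
              then have "j \<le> rr" using lr by auto
              show False
              proof (cases "rr = j")
                case True then show False using Hj H lr l_eq by simp
              next
                case False
                then have "V i j rr" using \<open>j \<le> rr\<close> i1 ij lr l_eq H Hj unfolding V_def by auto
                then show False using kmin \<open>rr < k\<close> by fastforce
              qed
            qed
            show ?thesis by (rule both[of i]) (use iH nj nk lr li ij jk in \<open>auto simp: rk3_def\<close>)
          next
            case ni: False
            show ?thesis
            proof (cases "j \<in> H")
              case True
              show ?thesis by (rule both[of j]) (use True ni nk lr li ij jk in \<open>auto simp: rk3_def\<close>)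
            next
              case nj: False
              show ?thesis by (rule both[of l]) (use ni nj nk lr li ij jk in \<open>auto simp: rk3_def\<close>)
            qed
          qed
        qed
      qed
    qed
  qed
  have acp: "acyclic_orientation I (Or_perm I \<pi>)" using Or_acyclic[OF ih p(1)] .
  have "weak_le n \<pi> \<rho>" unfolding weak_le_def using p(1) r(1) pr by blast
  then have "P_le n I (Or_perm I \<pi>) (Or_perm I \<sigma>)" using Or_mono[OF ih] rs by metis
  moreover have "P_le n I (Or_perm I \<pi>) (Or_perm I \<pi>)" using acp unfolding P_le_def by simp
  ultimately have "P_le n I (Or_perm I \<pi>) (Or_perm I m)" using im acp unfolding is_meet_def by blast
  then have le: "Or_perm I \<pi> {i..k} \<le> Or_perm I m {i..k}" using P_le_le Hk by blast
  have "Or_perm I \<pi> {i..k} = j"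
    by (rule Or_rank[OF ih p Hk]) (use ij jk in \<open>auto simp: rk3_def\<close>)
  moreover have "Or_perm I m {i..k} = i"
    by (rule Or_rank[OF ih m Hk]) (use ij jk in \<open>auto simp: rk3_def\<close>)
  ultimately show False using le ij by simp
qed

definition rk3' :: "nat \<Rightarrow> nat \<Rightarrow> nat \<Rightarrow> nat \<Rightarrow> nat \<Rightarrow> nat \<Rightarrow> nat" where
  "rk3' n k a b c v = (if k < v then n + 1 - v else if v = a then n+1 else if v = b then n+2 else if v = c then n+3 else 3*n+3-v)"

lemma rk3'_inj:
  assumes "a \<le> k" "b \<le> k" "c \<le> k" "a \<noteq> b" "a \<noteq> c" "b \<noteq> c" "k \<le> n"
  shows "inj_on (rk3' n k a b c) {1..n}"
proof (rule inj_onI)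
  fix x y assume xS: "x \<in> {1..n}" and yS: "y \<in> {1..n}" and xy: "rk3' n k a b c x = rk3' n k a b c y"
  have A: "k < v \<Longrightarrow> rk3' n k a b c v = n + 1 - v" for v by (simp add: rk3'_def)
  have B: "\<not> k < v \<Longrightarrow> rk3' n k a b c v \<ge> n + 1" for v using assms(7) by (auto simp add: rk3'_def)
  have C: "\<not> k < v \<Longrightarrow> rk3' n k a b c v = n + 1 \<longleftrightarrow> v = a" for v using assms by (auto simp add: rk3'_def)
  have D: "\<not> k < v \<Longrightarrow> rk3' n k a b c v = n + 2 \<longleftrightarrow> v = b" for v using assms by (auto simp add: rk3'_def)
  have E: "\<not> k < v \<Longrightarrow> rk3' n k a b c v = n + 3 \<longleftrightarrow> v = c" for v using assms by (auto simp add: rk3'_def)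
  have F: "\<not> k < v \<Longrightarrow> v \<noteq> a \<Longrightarrow> v \<noteq> b \<Longrightarrow> v \<noteq> c \<Longrightarrow> rk3' n k a b c v = 3 * n + 3 - v" for v by (simp add: rk3'_def)
  have xn: "x \<le> n" "1 \<le> x" and yn: "y \<le> n" "1 \<le> y" using xS yS by auto
  show "x = y"
  proof (cases "k < x")
    case xi: True
    have fx: "rk3' n k a b c x = n + 1 - x" using A[OF xi] .
    show ?thesis
    proof (cases "k < y")
      case True then show ?thesis using fx A[OF True] xy xn yn by linarith
    next
      case False then show ?thesis using fx B[OF False] xy xi xn by linarith
    qed
  next
    case xi: False
    show ?thesis
    proof (cases "k < y")
      case True then show ?thesis using A[OF True] B[OF xi] xy True yn by linarith
    next
      case yi: False
      show ?thesis
      proof (cases "x = a \<or> x = b \<or> x = c")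
        case True
        then show ?thesis
        proof (elim disjE)
          assume "x = a" then have "rk3' n k a b c y = n + 1" using xy C[OF xi] by simp
          then show ?thesis using C[OF yi] \<open>x = a\<close> by simp
        next
          assume "x = b" then have "rk3' n k a b c y = n + 2" using xy D[OF xi] by simp
          then show ?thesis using D[OF yi] \<open>x = b\<close> by simp
        next
          assume "x = c" then have "rk3' n k a b c y = n + 3" using xy E[OF xi] by simp
          then show ?thesis using E[OF yi] \<open>x = c\<close> by simp
        qed
      next
        case nx: False
        then have fx: "rk3' n k a b c x = 3 * n + 3 - x" using F xi by blast
        show ?thesis
        proof (cases "y = a \<or> y = b \<or> y = c")
          case True
          then have "rk3' n k a b c y \<le> n + 3" using C[OF yi] D[OF yi] E[OF yi] by auto
          then show ?thesis using fx xy xn by linarith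
        next
          case False
          then have "rk3' n k a b c y = 3 * n + 3 - y" using F yi by blast
          then show ?thesis using fx xy xn yn by linarith
        qed
      qed
    qed
  qed
qed

lemma rk3'_t1: assumes "i < j" "j < k" "k \<le> n" "x < y" "y \<le> n" "rk3' n k i j k y < rk3' n k i j k x"
  shows "rk3' n k j k i y < rk3' n k j k i x"
  using assms unfolding rk3'_def by (auto split: if_splits)
lemma rk3'_t2: assumes "i < j" "j < k" "k \<le> n" "x < y" "y \<le> n" "rk3' n k j k i y < rk3' n k j k i x"
  shows "rk3' n k k j i y < rk3' n k k j i x"
  using assms unfolding rk3'_def by (auto split: if_splits)
lemma rk3'_t3: assumes "i < j" "j < k" "k \<le> n" "x < y" "y \<le> n" "rk3' n k i k j y < rk3' n k i k j x"
  shows "rk3' n k k j i y < rk3' n k k j i x"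
  using assms unfolding rk3'_def by (auto split: if_splits)
lemma rk3'_t4: assumes "i < j" "j < k" "k \<le> n" "x < y" "y \<le> n" "rk3' n k k j i y < rk3' n k k j i x"
  shows "rk3' n k j k i y < rk3' n k j k i x \<or> rk3' n k i k j y < rk3' n k i k j x"
  using assms unfolding rk3'_def by (auto split: if_splits)

lemma join_only_if:
  assumes ih: "interval_hypergraph n I"
    and jm: "join_morphism {\<pi>. \<pi> permutes {1..n}} (weak_le n)
            {Rr. acyclic_orientation I Rr} (P_le n I) (Or_perm I)"
  shows "closed_final n I"
proof (rule ccontr)
  assume ncf: "\<not> closed_final n I"
  define W where "W i j k \<longleftrightarrow> 1 \<le> i \<and> i < j \<and> j < k \<and> k \<le> n \<and> {i..k} \<in> I \<and> {j..k} \<notin> I" for i j k :: nat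
  have ex: "\<exists>i j k. W i j k" using ncf unfolding closed_final_def W_def by blast
  define Si where "Si = {i. \<exists>j k. W i j k}"
  have finSi: "finite Si"
  proof (rule finite_subset[of _ "{1..n}"])
    show "Si \<subseteq> {1..n}" unfolding Si_def W_def by auto
  qed simp
  have SiNE: "Si \<noteq> {}" using ex unfolding Si_def by blast
  define i where "i = Max Si"
  have "i \<in> Si" unfolding i_def using Max_in[OF finSi SiNE] .
  then obtain j k where Wijk: "W i j k" unfolding Si_def by blast
  have imax: "i' \<le> i" if "W i' j' k'" for i' j' k'
    unfolding i_def using that Max_ge[OF finSi] unfolding Si_def by blast
  have i1: "1 \<le> i" and ij: "i < j" and jk: "j < k" and kn: "k \<le> n"
    and Hk: "{i..k} \<in> I" and Hj: "{j..k} \<notin> I" using Wijk unfolding W_def by auto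
  obtain \<pi> where p: "\<pi> permutes {1..n}"
    "\<forall>u\<in>{1..n}. \<forall>v\<in>{1..n}. inv \<pi> u < inv \<pi> v \<longleftrightarrow> rk3' n k j k i u < rk3' n k j k i v"
    using perm_of_rank[OF rk3'_inj[of j k k i n]] ij jk kn by auto
  obtain \<sigma> where s: "\<sigma> permutes {1..n}"
    "\<forall>u\<in>{1..n}. \<forall>v\<in>{1..n}. inv \<sigma> u < inv \<sigma> v \<longleftrightarrow> rk3' n k i k j u < rk3' n k i k j v"
    using perm_of_rank[OF rk3'_inj[of i k k j n]] ij jk kn by auto
  obtain m where m: "m permutes {1..n}"
    "\<forall>u\<in>{1..n}. \<forall>v\<in>{1..n}. inv m u < inv m v \<longleftrightarrow> rk3' n k k j i u < rk3' n k k j i v"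
    using perm_of_rank[OF rk3'_inj[of k k j i n]] ij jk kn by auto
  obtain \<rho> where r: "\<rho> permutes {1..n}"
    "\<forall>u\<in>{1..n}. \<forall>v\<in>{1..n}. inv \<rho> u < inv \<rho> v \<longleftrightarrow> rk3' n k i j k u < rk3' n k i j k v"
    using perm_of_rank[OF rk3'_inj[of i k j k n]] ij jk kn by auto
  note Ip = inversions_rank[OF p] and Is = inversions_rank[OF s]
    and Im = inversions_rank[OF m] and Ir = inversions_rank[OF r]
  have rp: "inversions \<rho> \<subseteq> inversions \<pi>" unfolding Ip Ir using rk3'_t1[OF ij jk kn] by auto
  have pm: "inversions \<pi> \<subseteq> inversions m" unfolding Ip Im using rk3'_t2[OF ij jk kn] by auto
  have sm: "inversions \<sigma> \<subseteq> inversions m" unfolding Is Im using rk3'_t3[OF ij jk kn] by auto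
  have mps: "inversions m \<subseteq> inversions \<pi> \<union> inversions \<sigma>" unfolding Ip Is Im using rk3'_t4[OF ij jk kn] by auto
  have "is_join {\<pi>. \<pi> permutes {1..n}} (weak_le n) \<pi> \<sigma> m"
    unfolding is_join_def weak_le_def using p(1) s(1) m(1) pm sm mps by blast
  then have ij_: "is_join {Rr. acyclic_orientation I Rr} (P_le n I) (Or_perm I \<pi>) (Or_perm I \<sigma>) (Or_perm I m)"
    using jm p(1) s(1) unfolding join_morphism_def by blast
  have rs: "Or_perm I \<rho> = Or_perm I \<sigma>"
  proof
    fix H show "Or_perm I \<rho> H = Or_perm I \<sigma> H"
    proof (cases "H \<in> I")
      case False then show ?thesis by (simp add: Or_out)
    next
      case H: True
      have both: "Or_perm I \<rho> H = Or_perm I \<sigma> H"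
        if "v \<in> H" "\<forall>w\<in>H. w \<noteq> v \<longrightarrow> rk3' n k i j k v < rk3' n k i j k w"
          "\<forall>w\<in>H. w \<noteq> v \<longrightarrow> rk3' n k i k j v < rk3' n k i k j w" for v
        using Or_rank[OF ih r H that(1,2)] Or_rank[OF ih s H that(1,3)] by simp
      obtain l rr where lr: "H = {l..rr}" "1 \<le> l" "l \<le> rr" "rr \<le> n" using ih_interval[OF ih H] by blast
      show ?thesis
      proof (cases "k < rr")
        case True
        show ?thesis by (rule both[of rr]) (use True lr kn in \<open>auto simp: rk3'_def\<close>)
      next
        case kr: False
        show ?thesis
        proof (cases "i \<in> H")
          case True
          show ?thesis by (rule both[of i]) (use True lr kr ij jk in \<open>auto simp: rk3'_def\<close>)
        next
          case ni: False
          show ?thesis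
          proof (cases "j \<in> H")
            case jH: True
            have nk: "k \<notin> H"
            proof
              assume "k \<in> H"
              then have rk: "rr = k" using lr kr by auto
              have "i < l" "l \<le> j" using ni jH lr ij jk rk by auto
              show False
              proof (cases "l = j")
                case True then show False using Hj H lr rk by simp
              next
                case False
                then have "W l j k" using \<open>i < l\<close> \<open>l \<le> j\<close> i1 jk kn lr rk H Hj unfolding W_def by auto
                then show False using imax \<open>i < l\<close> by fastforce
              qed
            qed
            show ?thesis by (rule both[of j]) (use jH ni nk lr kr ij jk in \<open>auto simp: rk3'_def\<close>)
          next
            case nj: False
            show ?thesis
            proof (cases "k \<in> H")
              case True
              show ?thesis by (rule both[of k]) (use True ni nj lr kr ij jk in \<open>auto simp: rk3'_def\<close>)
            next
              case nk: False
              show ?thesis by (rule both[of rr]) (use ni nj nk lr kr ij jk in \<open>auto simp: rk3'_def\<close>)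
            qed
          qed
        qed
      qed
    qed
  qed
  have acp: "acyclic_orientation I (Or_perm I \<pi>)" using Or_acyclic[OF ih p(1)] .
  have "weak_le n \<rho> \<pi>" unfolding weak_le_def using p(1) r(1) rp by blast
  then have "P_le n I (Or_perm I \<sigma>) (Or_perm I \<pi>)" using Or_mono[OF ih] rs by metis
  moreover have "P_le n I (Or_perm I \<pi>) (Or_perm I \<pi>)" using acp unfolding P_le_def by simp
  ultimately have "P_le n I (Or_perm I m) (Or_perm I \<pi>)" using ij_ acp unfolding is_join_def by blast
  then have le: "Or_perm I m {i..k} \<le> Or_perm I \<pi> {i..k}" using P_le_le Hk by blast
  have "Or_perm I \<pi> {i..k} = j"
    by (rule Or_rank[OF ih p Hk]) (use ij jk kn in \<open>auto simp: rk3'_def\<close>)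
  moreover have "Or_perm I m {i..k} = k"
    by (rule Or_rank[OF ih m Hk]) (use ij jk kn in \<open>auto simp: rk3'_def\<close>)
  ultimately show False using le jk by simp
qed

theorem theoremD:
  fixes n :: nat and I :: "nat set set"
  assumes "n \<ge> 1" and "interval_hypergraph n I"
  shows "(meet_morphism {\<pi>. \<pi> permutes {1..n}} (weak_le n)
            {Rr. acyclic_orientation I Rr} (P_le n I) (Or_perm I)
          \<longleftrightarrow> closed_initial n I)
       \<and> (join_morphism {\<pi>. \<pi> permutes {1..n}} (weak_le n)
            {Rr. acyclic_orientation I Rr} (P_le n I) (Or_perm I)
          \<longleftrightarrow> closed_final n I)"
  using meet_if[OF assms(2)] meet_only_if[OF assms(2)] join_if[OF assms(2)] join_only_if[OF assms(2)]
  by blast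

end
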